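(* For every $n\ge 5$, the alternating group $A_n$ is mixable, and \[\log_2(n!)-1\le \mathrm{mixlen}(A_n)\le \tfrac{3}{2}\lfloor\log_2(n!)\rfloor+\tfrac{1}{2}n.\]
   Context: For a finite group $G$, a random subproduct is a random element $g_1^{\epsilon_1}\cdots g_k^{\epsilon_k}$ where $g_1,\dots,g_k\in G$ are fixed and $\epsilon_1,\dots,\epsilon_k$ are independent Bernoulli random variables with $\epsilon_i\sim\mathrm{Ber}(p_i)$, $p_i\in[0,1]$. $G$ is mixable if some random subproduct is distributed exactly uniformly on $G$; the mixing length $\mathrm{mixlen}(G)$ is the minimal number $k$ of factors in such a random subproduct. *)

theory Defs
  imports "HOL-Analysis.Analysis" "HOL-Algebra.Sym_Groups"
begin

text \<open>The subproduct g_0^{e_0} g_1^{e_1} ... g_{k-1}^{e_{k-1}} (in this order), where the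
  exponent vector e is encoded by the set S of indices i with e_i = 1.\<close>
definition subprod :: "('a, 'b) monoid_scheme \<Rightarrow> (nat \<Rightarrow> 'a) \<Rightarrow> nat \<Rightarrow> nat set \<Rightarrow> 'a" where
  "subprod G g k S = foldr (\<lambda>i acc. (if i \<in> S then g i else \<one>\<^bsub>G\<^esub>) \<otimes>\<^bsub>G\<^esub> acc) [0..<k] \<one>\<^bsub>G\<^esub>"

text \<open>Probability that the random subproduct with independent eps_i ~ Ber(p i) equals x.\<close>
definition subprod_prob :: "('a, 'b) monoid_scheme \<Rightarrow> (nat \<Rightarrow> 'a) \<Rightarrow> (nat \<Rightarrow> real) \<Rightarrow> nat \<Rightarrow> 'a \<Rightarrow> real" where
  "subprod_prob G g p k x =
     (\<Sum>S\<in>{S. S \<subseteq> {0..<k} \<and> subprod G g k S = x}.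
        \<Prod>i\<in>{0..<k}. (if i \<in> S then p i else 1 - p i))"

definition mixes_with :: "('a, 'b) monoid_scheme \<Rightarrow> nat \<Rightarrow> bool" where
  "mixes_with G k \<longleftrightarrow> (\<exists>g p.
     (\<forall>i<k. g i \<in> carrier G) \<and> (\<forall>i<k. 0 \<le> p i \<and> p i \<le> 1) \<and>
     (\<forall>x\<in>carrier G. subprod_prob G g p k x = 1 / real (card (carrier G))))"

definition mixable :: "('a, 'b) monoid_scheme \<Rightarrow> bool" where
  "mixable G \<longleftrightarrow> (\<exists>k. mixes_with G k)"

definition mixlen :: "('a, 'b) monoid_scheme \<Rightarrow> nat" where
  "mixlen G = (LEAST k. mixes_with G k)"

end

theory Submission
  imports Defs
begin

definition DL :: "('a,'b) monoid_scheme \<Rightarrow> ('a \<times> real) list \<Rightarrow> 'a \<Rightarrow> real" where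
  "DL G L x = subprod_prob G (\<lambda>i. fst (L!i)) (\<lambda>i. snd (L!i)) (length L) x"

lemma subprod_cong:
  assumes "\<And>i. i < k \<Longrightarrow> g i = g' i" "\<And>i. i < k \<Longrightarrow> (i \<in> S) = (i \<in> S')"
  shows "subprod G g k S = subprod G g' k S'"
  unfolding subprod_def by (rule foldr_cong) (use assms in auto)

lemma subprod_prob_cong:
  assumes "\<And>i. i < k \<Longrightarrow> g i = g' i" "\<And>i. i < k \<Longrightarrow> p i = p' i"
  shows "subprod_prob G g p k x = subprod_prob G g' p' k x"
proof -
  have "{S. S \<subseteq> {0..<k} \<and> subprod G g k S = x} = {S. S \<subseteq> {0..<k} \<and> subprod G g' k S = x}"
    using subprod_cong[of k g g'] assms(1) by auto
  then show ?thesis unfolding subprod_prob_def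
    by (intro sum.cong prod.cong) (use assms(2) in auto)
qed

lemma (in monoid) foldr_mult_closed:
  assumes "\<And>i. i \<in> set xs \<Longrightarrow> c i \<in> carrier G"
  shows "foldr (\<lambda>i acc. c i \<otimes> acc) xs \<one> \<in> carrier G"
  using assms by (induction xs) auto

lemma (in monoid) foldr_mult_shift:
  assumes "\<And>i. i \<in> set xs \<Longrightarrow> c i \<in> carrier G" "a \<in> carrier G"
  shows "foldr (\<lambda>i acc. c i \<otimes> acc) xs a = foldr (\<lambda>i acc. c i \<otimes> acc) xs \<one> \<otimes> a"
  using assms
proof (induction xs)
  case Nil then show ?case by simp
next
  case (Cons y ys)
  have "foldr (\<lambda>i acc. c i \<otimes> acc) ys \<one> \<in> carrier G"
    using Cons.prems by (intro foldr_mult_closed) auto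
  then show ?case using Cons by (simp add: m_assoc)
qed

lemma (in monoid) subprod_closed:
  assumes "\<And>i. i < k \<Longrightarrow> g i \<in> carrier G"
  shows "subprod G g k S \<in> carrier G"
  unfolding subprod_def by (rule foldr_mult_closed) (use assms in auto)

lemma (in monoid) subprod_Suc:
  assumes "\<And>i. i \<le> k \<Longrightarrow> g i \<in> carrier G"
  shows "subprod G g (Suc k) S = subprod G g k S \<otimes> (if k \<in> S then g k else \<one>)"
proof -
  have "subprod G g (Suc k) S =
    foldr (\<lambda>i acc. (if i \<in> S then g i else \<one>) \<otimes> acc) [0..<k] ((if k \<in> S then g k else \<one>) \<otimes> \<one>)"
    unfolding subprod_def by simp
  also have "\<dots> = subprod G g k S \<otimes> (if k \<in> S then g k else \<one>)"
    unfolding subprod_def using assms by (subst foldr_mult_shift) auto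
  finally show ?thesis .
qed

lemma (in monoid) subprod_pred:
  assumes "P \<one>" "\<And>a b. P a \<Longrightarrow> P b \<Longrightarrow> P (a \<otimes> b)" "\<And>i. i < k \<Longrightarrow> P (g i)"
  shows "P (subprod G g k S)"
proof -
  have "\<And>xs. (\<forall>i\<in>set xs. i < k) \<Longrightarrow> P (foldr (\<lambda>i acc. (if i \<in> S then g i else \<one>) \<otimes> acc) xs \<one>)"
  proof -
    fix xs show "(\<forall>i\<in>set xs. i < k) \<Longrightarrow> P (foldr (\<lambda>i acc. (if i \<in> S then g i else \<one>) \<otimes> acc) xs \<one>)"
      by (induction xs) (use assms in auto)
  qed
  then show ?thesis unfolding subprod_def by simp
qed

lemma subprod_prob_alt:
  "subprod_prob G g p k x = (\<Sum>S\<in>Pow {0..<k}. if subprod G g k S = x then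
       (\<Prod>i\<in>{0..<k}. (if i \<in> S then p i else 1 - p i)) else 0)"
proof -
  have e: "{S. S \<subseteq> {0..<k} \<and> subprod G g k S = x} = {S \<in> Pow {0..<k}. subprod G g k S = x}" by auto
  show ?thesis unfolding subprod_prob_def e by (rule sum.inter_filter) simp
qed


lemma (in group) subprod_prob_Suc:
  assumes "\<And>i. i \<le> k \<Longrightarrow> g i \<in> carrier G" "x \<in> carrier G"
  shows "subprod_prob G g p (Suc k) x = (1 - p k) * subprod_prob G g p k x
            + p k * subprod_prob G g p k (x \<otimes> inv (g k))"
proof -
  define F where "F S = (\<Prod>i\<in>{0..<k}. (if i \<in> S then p i else 1 - p i))" for S
  define F' where "F' S = (\<Prod>i\<in>{0..<Suc k}. (if i \<in> S then p i else 1 - p i))" for S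
  define h where "h S = (if subprod G g (Suc k) S = x then F' S else 0)" for S
  have gk: "g k \<in> carrier G" using assms by auto
  have sc: "subprod G g k S \<in> carrier G" for S using assms by (intro subprod_closed) auto
  have Pw: "Pow {0..<Suc k} = Pow {0..<k} \<union> insert k ` Pow {0..<k}"
    by (simp add: atLeast0_lessThan_Suc Pow_insert)
  have disj: "Pow {0..<k} \<inter> insert k ` Pow {0..<k} = {}" by auto
  have inj: "inj_on (insert k) (Pow {0..<k})"
  proof (rule inj_onI)
    fix S T assume "S \<in> Pow {0..<k}" "T \<in> Pow {0..<k}" "insert k S = insert k T"
    then have "k \<notin> S" "k \<notin> T" by auto
    then have "S = insert k S - {k}" "T = insert k T - {k}" by auto
    then show "S = T" using \<open>insert k S = insert k T\<close> by simp
  qed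
  have "subprod_prob G g p (Suc k) x = sum h (Pow {0..<Suc k})"
    unfolding subprod_prob_alt h_def F'_def ..
  also have "\<dots> = sum h (Pow {0..<k}) + sum (h \<circ> insert k) (Pow {0..<k})"
    unfolding Pw by (subst sum.union_disjoint) (use disj inj in \<open>auto simp: sum.reindex\<close>)
  also have "sum h (Pow {0..<k}) = (1 - p k) * subprod_prob G g p k x"
  proof -
    have "h S = (1 - p k) * (if subprod G g k S = x then F S else 0)" if "S \<in> Pow {0..<k}" for S
    proof -
      have "k \<notin> S" using that by auto
      then have "subprod G g (Suc k) S = subprod G g k S" "F' S = F S * (1 - p k)"
        using subprod_Suc[of k g S] assms sc unfolding F'_def F_def by auto
      then show ?thesis unfolding h_def by auto
    qed
    then show ?thesis unfolding subprod_prob_alt F_def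
      by (simp add: sum_distrib_left)
  qed
  also have "sum (h \<circ> insert k) (Pow {0..<k}) = p k * subprod_prob G g p k (x \<otimes> inv (g k))"
  proof -
    have "h (insert k S) = p k * (if subprod G g k S = x \<otimes> inv (g k) then F S else 0)"
      if "S \<in> Pow {0..<k}" for S
    proof -
      have e1: "subprod G g k (insert k S) = subprod G g k S"
        by (rule subprod_cong) auto
      have "subprod G g (Suc k) (insert k S) = subprod G g k S \<otimes> g k"
        using subprod_Suc[of k g "insert k S"] assms e1 by auto
      moreover have "F' (insert k S) = F S * p k"
      proof -
        have "F' (insert k S) = F (insert k S) * p k" unfolding F'_def F_def by simp
        moreover have "F (insert k S) = F S" unfolding F_def by (intro prod.cong) auto
        ultimately show ?thesis by simp
      qed
      moreover have "(subprod G g k S \<otimes> g k = x) = (subprod G g k S = x \<otimes> inv (g k))"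
        using inv_solve_right[OF sc assms(2) gk] by auto
      ultimately show ?thesis unfolding h_def by auto
    qed
    then show ?thesis unfolding subprod_prob_alt F_def
      by (simp add: sum_distrib_left)
  qed
  finally show ?thesis .
qed


lemma DL_snoc:
  assumes "group G" "\<And>a. a \<in> set L \<Longrightarrow> fst a \<in> carrier G" "h \<in> carrier G" "x \<in> carrier G"
  shows "DL G (L @ [(h,q)]) x = (1 - q) * DL G L x + q * DL G L (x \<otimes>\<^bsub>G\<^esub> inv\<^bsub>G\<^esub> h)"
proof -
  let ?g = "\<lambda>i. fst ((L @ [(h,q)])!i)" and ?p = "\<lambda>i. snd ((L @ [(h,q)])!i)"
  have g: "?g i \<in> carrier G" if "i \<le> length L" for i
    using that assms(2,3) by (cases "i = length L") (auto simp: nth_append)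
  have "DL G (L @ [(h,q)]) x = subprod_prob G ?g ?p (Suc (length L)) x"
    unfolding DL_def by simp
  also have "\<dots> = (1 - q) * subprod_prob G ?g ?p (length L) x
       + q * subprod_prob G ?g ?p (length L) (x \<otimes>\<^bsub>G\<^esub> inv\<^bsub>G\<^esub> h)"
    using group.subprod_prob_Suc[OF assms(1), of "length L" ?g x ?p] g assms(4) by simp
  also have "subprod_prob G ?g ?p (length L) = subprod_prob G (\<lambda>i. fst (L!i)) (\<lambda>i. snd (L!i)) (length L)"
    by (intro ext subprod_prob_cong) (auto simp: nth_append)
  finally show ?thesis unfolding DL_def by simp
qed

lemma DL_Nil: "DL G [] y = (if y = \<one>\<^bsub>G\<^esub> then 1 else 0)"
proof -
  have s: "subprod G g 0 S = \<one>\<^bsub>G\<^esub>" for g S by (simp add: subprod_def)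
  have "{S. S \<subseteq> {0..<0::nat} \<and> subprod G (\<lambda>i. fst ([]!i)) 0 S = y} = (if y = \<one>\<^bsub>G\<^esub> then {{}} else {})"
    by (auto simp: s)
  then show ?thesis unfolding DL_def subprod_prob_def by (cases "y = \<one>\<^bsub>G\<^esub>") auto
qed

lemma (in group) DL_append:
  assumes "finite (carrier G)" "\<And>a. a \<in> set A \<Longrightarrow> fst a \<in> carrier G"
    "\<And>a. a \<in> set B \<Longrightarrow> fst a \<in> carrier G" "x \<in> carrier G"
  shows "DL G (A @ B) x = (\<Sum>z\<in>carrier G. DL G A z * DL G B (inv z \<otimes> x))"
  using assms(3,4)
proof (induction B arbitrary: x rule: rev_induct)
  case Nil
  have "(\<Sum>z\<in>carrier G. DL G A z * DL G [] (inv z \<otimes> x)) = (\<Sum>z\<in>carrier G. if z = x then DL G A z else 0)"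
  proof (intro sum.cong refl)
    fix z assume z: "z \<in> carrier G"
    have "(inv z \<otimes> x = \<one>) = (z = x)"
      using z Nil.prems by (metis inv_closed inv_equality inv_inv r_inv)
    then show "DL G A z * DL G [] (inv z \<otimes> x) = (if z = x then DL G A z else 0)"
      by (simp add: DL_Nil)
  qed
  then show ?case using Nil.prems assms(1) by simp
next
  case (snoc b B)
  obtain h q where b: "b = (h,q)" by fastforce
  have h: "h \<in> carrier G" using snoc.prems(1)[of b] b by simp
  have AB: "\<And>a. a \<in> set (A @ B) \<Longrightarrow> fst a \<in> carrier G" using assms(2) snoc.prems by auto
  have "DL G ((A @ B) @ [(h,q)]) x = (1 - q) * DL G (A @ B) x + q * DL G (A @ B) (x \<otimes> inv h)"
    by (rule DL_snoc[OF is_group AB h snoc.prems(2)])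
  then have "DL G (A @ B @ [b]) x = (1 - q) * DL G (A @ B) x + q * DL G (A @ B) (x \<otimes> inv h)"
    using b by simp
  also have "\<dots> = (1 - q) * (\<Sum>z\<in>carrier G. DL G A z * DL G B (inv z \<otimes> x))
      + q * (\<Sum>z\<in>carrier G. DL G A z * DL G B (inv z \<otimes> (x \<otimes> inv h)))"
    using snoc.IH[OF _ snoc.prems(2)] snoc.IH[of "x \<otimes> inv h"] snoc.prems h by simp
  also have "\<dots> = (\<Sum>z\<in>carrier G. (1 - q) * (DL G A z * DL G B (inv z \<otimes> x))
      + q * (DL G A z * DL G B (inv z \<otimes> (x \<otimes> inv h))))"
    by (simp add: sum.distrib sum_distrib_left)
  also have "\<dots> = (\<Sum>z\<in>carrier G. DL G A z * DL G (B @ [b]) (inv z \<otimes> x))"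
  proof (intro sum.cong refl)
    fix z assume z: "z \<in> carrier G"
    have "DL G (B @ [b]) (inv z \<otimes> x) = (1 - q) * DL G B (inv z \<otimes> x) + q * DL G B ((inv z \<otimes> x) \<otimes> inv h)"
      using DL_snoc[OF is_group, of B h "inv z \<otimes> x" q] snoc.prems z h b by simp
    also have "(inv z \<otimes> x) \<otimes> inv h = inv z \<otimes> (x \<otimes> inv h)" using z h snoc.prems by (simp add: m_assoc)
    finally have eq: "DL G (B @ [b]) (inv z \<otimes> x) = (1 - q) * DL G B (inv z \<otimes> x) + q * DL G B (inv z \<otimes> (x \<otimes> inv h))" .
    show "(1 - q) * (DL G A z * DL G B (inv z \<otimes> x)) + q * (DL G A z * DL G B (inv z \<otimes> (x \<otimes> inv h)))
       = DL G A z * DL G (B @ [b]) (inv z \<otimes> x)" unfolding eq by (simp add: algebra_simps)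
  qed
  finally show ?case by simp
qed

lemma DL_support:
  assumes "monoid G" "DL G L y \<noteq> 0" "\<And>a. a \<in> set L \<Longrightarrow> fst a \<in> carrier G"
    "P \<one>\<^bsub>G\<^esub>" "\<And>a b. P a \<Longrightarrow> P b \<Longrightarrow> P (a \<otimes>\<^bsub>G\<^esub> b)" "\<And>a. a \<in> set L \<Longrightarrow> P (fst a)"
  shows "P y"
proof -
  let ?A = "{S. S \<subseteq> {0..<length L} \<and> subprod G (\<lambda>i. fst (L!i)) (length L) S = y}"
  have "?A \<noteq> {}"
  proof
    assume "?A = {}"
    have "DL G L y = (\<Sum>S\<in>?A. \<Prod>i = 0..<length L. if i \<in> S then snd (L ! i) else 1 - snd (L ! i))"
      unfolding DL_def subprod_prob_def by (rule refl)
    also have "\<dots> = 0" by (simp only: \<open>?A = {}\<close> sum.empty)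
    finally show False using assms(2) by simp
  qed
  then obtain S where "subprod G (\<lambda>i. fst (L!i)) (length L) S = y" by blast
  moreover have "P (subprod G (\<lambda>i. fst (L!i)) (length L) S)"
    by (rule monoid.subprod_pred[OF assms(1)]) (use assms(4,5,6) in auto)
  ultimately show ?thesis by simp
qed

abbreviation CA :: "nat \<Rightarrow> (nat \<Rightarrow> nat) set" where "CA n \<equiv> carrier (alt_group n)"

definition inC :: "nat \<Rightarrow> ((nat \<Rightarrow> nat) \<times> real) list \<Rightarrow> bool" where
  "inC n L \<longleftrightarrow> (\<forall>a\<in>set L. fst a \<in> CA n)"

definition PL :: "nat \<Rightarrow> ((nat \<Rightarrow> nat) \<times> real) list \<Rightarrow> nat list \<Rightarrow> nat list \<Rightarrow> real" where
  "PL n L s t = (\<Sum>y\<in>CA n. DL (alt_group n) L y * (if map y s = t then 1 else 0))"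

lemma CA_finite: "finite (CA n)"
proof -
  have "CA n \<subseteq> {p. p permutes {1..n}}" by (auto simp: alt_group_carrier)
  moreover have "finite {p. p permutes {1..n}}" by (rule finite_permutations) simp
  ultimately show ?thesis by (rule finite_subset)
qed

lemma CA_perm: "z \<in> CA n \<Longrightarrow> z permutes {1..n}"
  by (simp add: alt_group_carrier)

lemma CA_id: "id \<in> CA n"
  using monoid.one_closed[OF group.is_monoid[OF alt_group_is_group]] by (simp add: alt_group_one)

lemma CA_comp: "a \<in> CA n \<Longrightarrow> b \<in> CA n \<Longrightarrow> a \<circ> b \<in> CA n"
proof -
  assume a: "a \<in> CA n" and b: "b \<in> CA n"
  have pa: "a permutes {1..n}" "evenperm a" and pb: "b permutes {1..n}" "evenperm b"
    using a b by (auto simp: alt_group_carrier)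
  have "permutation a" "permutation b" using pa pb permutation_permutes by blast+
  then have "evenperm (a \<circ> b)" using pa pb by (simp add: evenperm_comp)
  moreover have "a \<circ> b permutes {1..n}" using pa pb permutes_compose by blast
  ultimately show ?thesis by (simp add: alt_group_carrier)
qed

lemma CA_inv: "a \<in> CA n \<Longrightarrow> inv' a \<in> CA n"
  by (rule alt_group_inv_closed)

lemma CA_invl: "a \<in> CA n \<Longrightarrow> inv' a \<circ> a = id"
  by (rule permutes_inv_o(2)[OF CA_perm])

lemma CA_invr: "a \<in> CA n \<Longrightarrow> a \<circ> inv' a = id"
  by (rule permutes_inv_o(1)[OF CA_perm])

lemma CA_invl': "a \<in> CA n \<Longrightarrow> inv' a (a x) = x"
  by (rule permutes_inverses(2)[OF CA_perm])

lemma CA_invr': "a \<in> CA n \<Longrightarrow> a (inv' a x) = x"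
  by (rule permutes_inverses(1)[OF CA_perm])

lemma CA_inj: "a \<in> CA n \<Longrightarrow> inj a"
  by (rule permutes_inj[OF CA_perm])

lemma CA_I: "z permutes S \<Longrightarrow> S \<subseteq> {1..n} \<Longrightarrow> evenperm z \<Longrightarrow> z \<in> CA n"
proof -
  assume "z permutes S" "S \<subseteq> {1..n}" "evenperm z"
  moreover from this have "z permutes {1..n}" using permutes_subset by blast
  ultimately show ?thesis by (simp add: alt_group_carrier)
qed

lemma DL_append_A:
  assumes "inC n A" "inC n B" "x \<in> CA n"
  shows "DL (alt_group n) (A @ B) x = (\<Sum>z\<in>CA n. DL (alt_group n) A z * DL (alt_group n) B (inv' z \<circ> x))"
proof -
  have "DL (alt_group n) (A @ B) x = (\<Sum>z\<in>CA n. DL (alt_group n) A z * DL (alt_group n) B (inv\<^bsub>alt_group n\<^esub> z \<otimes>\<^bsub>alt_group n\<^esub> x))"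
    by (rule group.DL_append[OF alt_group_is_group CA_finite]) (use assms in \<open>auto simp: inC_def\<close>)
  also have "\<dots> = (\<Sum>z\<in>CA n. DL (alt_group n) A z * DL (alt_group n) B (inv' z \<circ> x))"
    by (intro sum.cong refl) (simp add: alt_group_inv_equality alt_group_mult)
  finally show ?thesis .
qed

lemma DL_Nil_A: "DL (alt_group n) [] y = (if y = id then 1 else 0)"
  by (simp add: DL_Nil alt_group_one)

lemma DL_single_A:
  assumes "h \<in> CA n" "y \<in> CA n"
  shows "DL (alt_group n) [(h,q)] y = (1 - q) * (if y = id then 1 else 0) + q * (if y = h then 1 else 0)"
proof -
  have "DL (alt_group n) ([] @ [(h,q)]) y = (1 - q) * DL (alt_group n) [] y + q * DL (alt_group n) [] (y \<otimes>\<^bsub>alt_group n\<^esub> inv\<^bsub>alt_group n\<^esub> h)"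
    by (rule DL_snoc[OF alt_group_is_group]) (use assms in auto)
  moreover have "(y \<circ> inv' h = id) = (y = h)"
  proof
    assume "y \<circ> inv' h = id"
    then have "(y \<circ> inv' h) \<circ> h = h" by simp
    then show "y = h" using CA_invl[OF assms(1)] by (simp add: o_assoc[symmetric])
  qed (use CA_invr[OF assms(1)] in simp)
  ultimately show ?thesis using assms by (simp add: DL_Nil_A alt_group_inv_equality alt_group_mult)
qed

lemma map_inv_eq:
  assumes "z \<in> CA n"
  shows "(map z s = t) = (s = map (inv' z) t)"
proof
  assume "map z s = t"
  then show "s = map (inv' z) t" using CA_invl'[OF assms] by (auto simp: comp_def)
next
  assume "s = map (inv' z) t"
  then show "map z s = t" using CA_invr'[OF assms] by (simp add: comp_def map_idI)
qed

lemma PL_append: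
  assumes "inC n A" "inC n B"
  shows "PL n (A @ B) s t = (\<Sum>z\<in>CA n. DL (alt_group n) A z * PL n B s (map (inv' z) t))"
proof -
  let ?DA = "DL (alt_group n) A" and ?DB = "DL (alt_group n) B"
  have "PL n (A @ B) s t = (\<Sum>y\<in>CA n. (\<Sum>z\<in>CA n. ?DA z * ?DB (inv' z \<circ> y)) * (if map y s = t then 1 else 0))"
    unfolding PL_def using DL_append_A[OF assms] by simp
  also have "\<dots> = (\<Sum>z\<in>CA n. ?DA z * (\<Sum>y\<in>CA n. ?DB (inv' z \<circ> y) * (if map y s = t then 1 else 0)))"
  proof -
    have "(\<Sum>y\<in>CA n. (\<Sum>z\<in>CA n. ?DA z * ?DB (inv' z \<circ> y)) * (if map y s = t then 1 else 0))
        = (\<Sum>y\<in>CA n. \<Sum>z\<in>CA n. ?DA z * (?DB (inv' z \<circ> y) * (if map y s = t then 1 else 0)))"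
      by (simp add: sum_distrib_right mult.assoc)
    also have "\<dots> = (\<Sum>z\<in>CA n. \<Sum>y\<in>CA n. ?DA z * (?DB (inv' z \<circ> y) * (if map y s = t then 1 else 0)))"
      by (rule sum.swap)
    also have "\<dots> = (\<Sum>z\<in>CA n. ?DA z * (\<Sum>y\<in>CA n. ?DB (inv' z \<circ> y) * (if map y s = t then 1 else 0)))"
      by (simp add: sum_distrib_left)
    finally show ?thesis .
  qed
  also have "\<dots> = (\<Sum>z\<in>CA n. ?DA z * PL n B s (map (inv' z) t))"
  proof (intro sum.cong refl arg_cong2[where f="(*)"])
    fix z assume z: "z \<in> CA n"
    show "(\<Sum>y\<in>CA n. ?DB (inv' z \<circ> y) * (if map y s = t then 1 else 0)) = PL n B s (map (inv' z) t)"
      unfolding PL_def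
    proof (rule sum.reindex_bij_witness[where i="\<lambda>v. z \<circ> v" and j="\<lambda>y. inv' z \<circ> y"])
      fix y assume "y \<in> CA n"
      show "z \<circ> (inv' z \<circ> y) = y" using CA_invr[OF z] by (simp add: o_assoc)
      show "inv' z \<circ> y \<in> CA n" using CA_comp CA_inv z \<open>y \<in> CA n\<close> by blast
      have inj: "inj (inv' z)" by (rule CA_inj[OF CA_inv[OF z]])
      have "(map (inv' z \<circ> y) s = map (inv' z) t) = (map y s = t)"
        using inj_map_eq_map[OF inj, of "map y s" t] by (simp only: map_map)
      then show "?DB (inv' z \<circ> y) * (if map (inv' z \<circ> y) s = map (inv' z) t then 1 else 0)
          = ?DB (inv' z \<circ> y) * (if map y s = t then 1 else 0)" by simp
    next
      fix v assume "v \<in> CA n"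
      show "inv' z \<circ> (z \<circ> v) = v" using CA_invl[OF z] by (simp add: o_assoc)
      show "z \<circ> v \<in> CA n" using CA_comp z \<open>v \<in> CA n\<close> by blast
    qed
  qed
  finally show ?thesis .
qed

lemma sum_two_delta:
  assumes "a \<in> A" "b \<in> A" "finite A"
  shows "(\<Sum>z\<in>A. ((u::real) * (if z = a then 1 else 0) + w * (if z = b then 1 else 0)) * F z) = u * F a + w * F b"
proof -
  have e: "(\<Sum>z\<in>A. (if z = c then 1 else 0) * F z) = F c" if "c \<in> A" for c
  proof -
    have "(\<Sum>z\<in>A. (if z = c then 1 else 0) * F z) = (\<Sum>z\<in>A. if z = c then F z else 0)"
      by (intro sum.cong) auto
    also have "\<dots> = F c" using that assms(3) by (simp add: sum.delta)
    finally show ?thesis .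
  qed
  have "(\<Sum>z\<in>A. (u * (if z = a then 1 else 0) + w * (if z = b then 1 else 0)) * F z)
      = u * (\<Sum>z\<in>A. (if z = a then 1 else 0) * F z) + w * (\<Sum>z\<in>A. (if z = b then 1 else 0) * F z)"
    by (simp add: distrib_right sum.distrib sum_distrib_left mult.assoc)
  then show ?thesis using e assms(1,2) by simp
qed

lemma PL_Nil: "PL n [] s t = (if s = t then 1 else 0)"
proof -
  have "PL n [] s t = (\<Sum>y\<in>CA n. (if y = id then (if map y s = t then 1 else 0) else 0))"
    unfolding PL_def DL_Nil_A by (intro sum.cong refl) auto
  also have "\<dots> = (if s = t then 1 else 0)" using CA_finite CA_id by (simp add: sum.delta)
  finally show ?thesis .
qed

lemma PL_single:
  assumes "h \<in> CA n"
  shows "PL n [(h,q)] s t = (1 - q) * (if s = t then 1 else 0) + q * (if map h s = t then 1 else 0)"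
proof -
  have "PL n [(h,q)] s t = (\<Sum>y\<in>CA n. ((1 - q) * (if y = id then 1 else 0) + q * (if y = h then 1 else 0)) * (if map y s = t then 1 else 0))"
    unfolding PL_def by (intro sum.cong refl) (simp add: DL_single_A assms)
  also have "\<dots> = (1 - q) * (if map id s = t then 1 else 0) + q * (if map h s = t then 1 else 0)"
    by (rule sum_two_delta[OF CA_id assms CA_finite])
  finally show ?thesis by simp
qed

lemma PL_snoc:
  assumes "inC n L" "h \<in> CA n"
  shows "PL n (L @ [(h,q)]) s t = (1 - q) * PL n L s t + q * PL n L (map h s) t"
proof -
  have "PL n (L @ [(h,q)]) s t = (\<Sum>z\<in>CA n. DL (alt_group n) L z * PL n [(h,q)] s (map (inv' z) t))"
    by (rule PL_append) (use assms in \<open>auto simp: inC_def\<close>)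
  also have "\<dots> = (\<Sum>z\<in>CA n. (1 - q) * (DL (alt_group n) L z * (if map z s = t then 1 else 0))
        + q * (DL (alt_group n) L z * (if map z (map h s) = t then 1 else 0)))"
  proof (intro sum.cong refl)
    fix z assume z: "z \<in> CA n"
    show "DL (alt_group n) L z * PL n [(h,q)] s (map (inv' z) t) = (1 - q) * (DL (alt_group n) L z * (if map z s = t then 1 else 0))
        + q * (DL (alt_group n) L z * (if map z (map h s) = t then 1 else 0))"
      unfolding PL_single[OF assms(2)] map_inv_eq[OF z, of s t] map_inv_eq[OF z, of "map h s" t]
      by (simp add: algebra_simps)
  qed
  also have "\<dots> = (1 - q) * PL n L s t + q * PL n L (map h s) t"
    unfolding PL_def by (simp add: sum.distrib sum_distrib_left)
  finally show ?thesis .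
qed

lemma PL_cons:
  assumes "inC n L" "h \<in> CA n"
  shows "PL n ((h,q) # L) s t = (1 - q) * PL n L s t + q * PL n L s (map (inv' h) t)"
proof -
  have "PL n ([(h,q)] @ L) s t = (\<Sum>z\<in>CA n. DL (alt_group n) [(h,q)] z * PL n L s (map (inv' z) t))"
    by (rule PL_append) (use assms in \<open>auto simp: inC_def\<close>)
  also have "\<dots> = (\<Sum>z\<in>CA n. ((1 - q) * (if z = id then 1 else 0) + q * (if z = h then 1 else 0)) * PL n L s (map (inv' z) t))"
    by (intro sum.cong refl) (simp add: DL_single_A assms)
  also have "\<dots> = (1 - q) * PL n L s (map (inv' id) t) + q * PL n L s (map (inv' h) t)"
    by (rule sum_two_delta[OF CA_id assms(2) CA_finite])
  finally show ?thesis by (simp add: inv_id)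
qed

lemma inC_append[simp]: "inC n (A @ B) = (inC n A \<and> inC n B)"
  by (auto simp: inC_def)

lemma inC_Cons[simp]: "inC n (a # B) = (fst a \<in> CA n \<and> inC n B)"
  by (auto simp: inC_def)

lemma inC_Nil[simp]: "inC n []"
  by (auto simp: inC_def)

lemma PL_fixpt:
  assumes "inC n L" "\<And>a. a \<in> set L \<Longrightarrow> fst a p = p"
  shows "PL n L [p] t = (if [p] = t then 1 else 0)"
  using assms
proof (induction L rule: rev_induct)
  case Nil then show ?case by (simp add: PL_Nil)
next
  case (snoc a L)
  obtain h q where a: "a = (h,q)" by fastforce
  have "PL n (L @ [(h,q)]) [p] t = (1 - q) * PL n L [p] t + q * PL n L (map h [p]) t"
    by (rule PL_snoc) (use snoc.prems a in auto)
  moreover have "h p = p" using snoc.prems(2)[of a] a by simp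
  ultimately show ?case using snoc by (simp add: a algebra_simps)
qed

lemma DL_support_A:
  assumes "DL (alt_group n) L y \<noteq> 0" "inC n L" "P id" "\<And>a b. P a \<Longrightarrow> P b \<Longrightarrow> P (a \<circ> b)"
    "\<And>a. a \<in> set L \<Longrightarrow> P (fst a)"
  shows "P y"
proof (rule DL_support[OF group.is_monoid[OF alt_group_is_group] assms(1)])
  show "\<And>a. a \<in> set L \<Longrightarrow> fst a \<in> carrier (alt_group n)" using assms(2) by (simp add: inC_def)
  show "P \<one>\<^bsub>alt_group n\<^esub>" using assms(3) by (simp only: alt_group_one)
  show "\<And>a b. P a \<Longrightarrow> P b \<Longrightarrow> P (a \<otimes>\<^bsub>alt_group n\<^esub> b)" using assms(4) by (simp only: alt_group_mult)
  show "\<And>a. a \<in> set L \<Longrightarrow> P (fst a)" by (rule assms(5))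
qed

lemma DL_support_img:
  assumes "DL (alt_group n) L y \<noteq> 0" "inC n L" "\<And>a. a \<in> set L \<Longrightarrow> fst a ` S = S"
  shows "y ` S = S"
proof (rule DL_support_A[OF assms(1,2), where P="\<lambda>y. y ` S = S"])
  show "id ` S = S" by simp
  show "\<And>a b. a ` S = S \<Longrightarrow> b ` S = S \<Longrightarrow> (a \<circ> b) ` S = S" by (simp only: image_comp[symmetric])
  show "\<And>a. a \<in> set L \<Longrightarrow> fst a ` S = S" by (rule assms(3))
qed

lemma DL_support_fix:
  assumes "DL (alt_group n) L y \<noteq> 0" "inC n L" "\<And>a. a \<in> set L \<Longrightarrow> fst a p = p"
  shows "y p = p"
proof (rule DL_support_A[OF assms(1,2), where P="\<lambda>y. y p = p"])
  show "id p = p" by simp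
  show "\<And>a b. a p = p \<Longrightarrow> b p = p \<Longrightarrow> (a \<circ> b) p = p" by simp
  show "\<And>a. a \<in> set L \<Longrightarrow> fst a p = p" by (rule assms(3))
qed

lemma PL_split_fix:
  assumes "inC n L" "\<And>a. a \<in> set L \<Longrightarrow> fst a p = p" "length s = length t"
  shows "PL n L (s @ [p]) (t @ [b]) = (if b = p then PL n L s t else 0)"
proof -
  have "PL n L (s @ [p]) (t @ [b]) = (\<Sum>y\<in>CA n. if b = p then DL (alt_group n) L y * (if map y s = t then 1 else 0) else 0)"
    unfolding PL_def
  proof (intro sum.cong refl)
    fix y assume y: "y \<in> CA n"
    show "DL (alt_group n) L y * (if map y (s @ [p]) = t @ [b] then 1 else 0) =
        (if b = p then DL (alt_group n) L y * (if map y s = t then 1 else 0) else 0)"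
    proof (cases "DL (alt_group n) L y = 0")
      case True then show ?thesis by simp
    next
      case False
      have "y p = p" by (rule DL_support_fix[OF False assms(1,2)])
      then have "(map y (s @ [p]) = t @ [b]) = (map y s = t \<and> p = b)"
        using assms(3) by auto
      then show ?thesis by auto
    qed
  qed
  also have "\<dots> = (if b = p then PL n L s t else 0)" unfolding PL_def by simp
  finally show ?thesis .
qed

lemma PL_set_zero:
  assumes "inC n L" "\<And>a. a \<in> set L \<Longrightarrow> fst a ` S = S" "set s = S" "set t \<noteq> S"
  shows "PL n L s t = 0"
  unfolding PL_def
proof (intro sum.neutral ballI)
  fix y assume y: "y \<in> CA n"
  show "DL (alt_group n) L y * (if map y s = t then 1 else 0) = 0"
  proof (cases "DL (alt_group n) L y = 0")
    case False
    have "y ` S = S" by (rule DL_support_img[OF False assms(1,2)])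
    then have "map y s \<noteq> t" using assms(3,4) by auto
    then show ?thesis by simp
  qed simp
qed

definition swp :: "nat \<Rightarrow> nat \<Rightarrow> nat \<Rightarrow> nat" where
  "swp lo k x = (if lo \<le> x \<and> x < lo + k then x + k else if lo + k \<le> x \<and> x < lo + 2*k then x - k else x)"

lemma swp_swp: "swp lo k (swp lo k x) = x"
  unfolding swp_def by auto

lemma swp_permutes: "swp lo k permutes {lo..<lo+2*k}"
proof (rule bij_imp_permutes)
  have "inj (swp lo k)" by (metis injI swp_swp)
  moreover have "swp lo k ` {lo..<lo+2*k} = {lo..<lo+2*k}"
  proof
    show "swp lo k ` {lo..<lo+2*k} \<subseteq> {lo..<lo+2*k}" unfolding swp_def by auto
    show "{lo..<lo+2*k} \<subseteq> swp lo k ` {lo..<lo+2*k}"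
    proof
      fix x assume x: "x \<in> {lo..<lo+2*k}"
      have "swp lo k x \<in> {lo..<lo+2*k}" using x unfolding swp_def by auto
      then show "x \<in> swp lo k ` {lo..<lo+2*k}" by (metis image_eqI swp_swp)
    qed
  qed
  moreover have "inj_on (swp lo k) {lo..<lo+2*k}" by (rule inj_on_subset[OF \<open>inj (swp lo k)\<close>]) simp
  ultimately show "bij_betw (swp lo k) {lo..<lo+2*k} {lo..<lo+2*k}"
    by (simp add: bij_betw_def)
  show "\<And>x. x \<notin> {lo..<lo+2*k} \<Longrightarrow> swp lo k x = x" unfolding swp_def by auto
qed

lemma swp_image: "swp lo k ` {lo+k..<lo+2*k} = {lo..<lo+k}"
proof
  show "swp lo k ` {lo+k..<lo+2*k} \<subseteq> {lo..<lo+k}" unfolding swp_def by auto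
  show "{lo..<lo+k} \<subseteq> swp lo k ` {lo+k..<lo+2*k}"
  proof
    fix x assume x: "x \<in> {lo..<lo+k}"
    have "swp lo k x \<in> {lo+k..<lo+2*k}" using x unfolding swp_def by auto
    then show "x \<in> swp lo k ` {lo+k..<lo+2*k}" by (metis image_eqI swp_swp)
  qed
qed

function sp :: "(nat \<Rightarrow> nat \<Rightarrow> nat) \<Rightarrow> nat \<Rightarrow> nat \<Rightarrow> ((nat \<Rightarrow> nat) \<times> real) list" where
  "sp fx lo len = (if len \<le> 1 then [] else if len = 2 then [(Transposition.transpose lo (lo+1) \<circ> fx lo, 1/2)]
     else if even len then
       (if evenperm (swp lo (len div 2)) then swp lo (len div 2)
        else swp lo (len div 2) \<circ> Transposition.transpose (lo + len div 2) (lo + len div 2 + 1), 1/2)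
       # sp fx (lo + len div 2) (len div 2)
     else sp fx lo (len - 1) @ [(Transposition.transpose (lo+len-1) (lo+len-2) \<circ> Transposition.transpose lo (lo+1), real (len - 1) / real len)])"
  by pat_completeness auto
termination by (relation "Wellfounded.measure (\<lambda>(fx,lo,len). len)") auto

declare sp.simps[simp del]

definition fxok :: "(nat \<Rightarrow> nat \<Rightarrow> nat) \<Rightarrow> nat \<Rightarrow> nat set \<Rightarrow> nat set \<Rightarrow> nat \<Rightarrow> bool" where
  "fxok fx R S1 S2 lo0 \<longleftrightarrow> (\<forall>lo. lo0 \<le> lo \<longrightarrow> lo + 1 \<le> R \<longrightarrow>
     (permutation (fx lo) \<and> \<not> evenperm (fx lo) \<and> fx lo ` S1 = S1 \<and> fx lo permutes S2 \<and>
      (\<forall>x. lo + 1 \<le> x \<and> x \<le> R \<longrightarrow> fx lo x = x)))"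

definition good :: "nat \<Rightarrow> nat set \<Rightarrow> nat set \<Rightarrow> nat \<Rightarrow> nat \<Rightarrow> ((nat \<Rightarrow> nat) \<times> real) \<Rightarrow> bool" where
  "good R S1 S2 lo len a \<longleftrightarrow> fst a permutes S2 \<and> fst a ` S1 = S1 \<and> evenperm (fst a) \<and>
     (\<forall>x. lo + len \<le> x \<and> x \<le> R \<longrightarrow> fst a x = x) \<and> 0 \<le> snd a \<and> snd a \<le> 1"

lemma perm_sub_image: "p permutes T \<Longrightarrow> T \<subseteq> S \<Longrightarrow> p ` S = S"
  using permutes_image permutes_subset by blast

lemma perm_sub: "p permutes T \<Longrightarrow> T \<subseteq> S \<Longrightarrow> p permutes S"
  using permutes_subset by blast

lemma swp_perm: "permutation (swp lo k)"
  using swp_permutes permutation_permutes by blast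

lemma sp_inv:
  assumes fx: "fxok fx R S1 S2 lo0" and lo0: "lo0 \<le> 2" and S: "{1..R} \<subseteq> S1" "S1 \<subseteq> S2"
  shows "1 \<le> lo \<Longrightarrow> lo + len \<le> R + 1 \<Longrightarrow> (lo0 \<le> lo \<or> 4 \<le> len) \<Longrightarrow> a \<in> set (sp fx lo len) \<Longrightarrow> good R S1 S2 lo len a"
proof (induction len arbitrary: lo a rule: less_induct)
  case (less len)
  have I1: "{lo..<lo+len} \<subseteq> S1" using less.prems S by auto
  show ?case
  proof (cases "len \<le> 1")
    case True then show ?thesis using less.prems by (simp add: sp.simps)
  next
    case False
    note nle = False
    show ?thesis
    proof (cases "len = 2")
      case True
      then have lo: "lo0 \<le> lo" using less.prems by auto
      have a: "a = (Transposition.transpose lo (lo+1) \<circ> fx lo, 1/2)" using less.prems True by (simp add: sp.simps)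
      have F: "permutation (fx lo)" "\<not> evenperm (fx lo)" "fx lo ` S1 = S1" "fx lo permutes S2"
          "\<And>x. lo + 1 \<le> x \<Longrightarrow> x \<le> R \<Longrightarrow> fx lo x = x"
        using fx lo less.prems True unfolding fxok_def by auto
      have T: "Transposition.transpose lo (lo+1) permutes {lo..<lo+len}" using True by (intro permutes_swap_id) auto
      show ?thesis unfolding good_def a fst_conv snd_conv
      proof (intro conjI allI impI)
        show "Transposition.transpose lo (lo + 1) \<circ> fx lo permutes S2"
          using permutes_compose[OF F(4) perm_sub[OF T]] I1 S by auto
        show "(Transposition.transpose lo (lo + 1) \<circ> fx lo) ` S1 = S1"
          by (simp only: image_comp[symmetric] F(3) perm_sub_image[OF T I1])
        show "evenperm (Transposition.transpose lo (lo + 1) \<circ> fx lo)"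
          using F(1,2) by (simp add: evenperm_comp permutation_swap_id evenperm_swap)
        fix x assume "lo + len \<le> x \<and> x \<le> R"
        then show "(Transposition.transpose lo (lo + 1) \<circ> fx lo) x = x" using F(5) True by auto
      qed auto
    next
      case False
      note n2 = False
      show ?thesis
      proof (cases "even len")
        case True
        define k where "k = len div 2"
        have k: "len = 2*k" "2 \<le> k" using True nle n2 unfolding k_def by auto
        define \<pi> where "\<pi> = swp lo k"
        define h where "h = (if evenperm \<pi> then \<pi> else \<pi> \<circ> Transposition.transpose (lo + k) (lo + k + 1))"
        have sp_eq: "sp fx lo len = (h, 1/2) # sp fx (lo + k) k"
          using True nle n2 unfolding h_def \<pi>_def k_def by (subst sp.simps) simp
        show ?thesis
        proof (cases "a = (h, 1/2)")
          case True
          have P: "\<pi> permutes {lo..<lo+len}" unfolding \<pi>_def k using swp_permutes by simp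
          have T: "Transposition.transpose (lo + k) (lo + k + 1) permutes {lo..<lo+len}" using k by (intro permutes_swap_id) auto
          have hp: "h permutes {lo..<lo+len}" unfolding h_def using P T permutes_compose by auto
          have he: "evenperm h" unfolding h_def using swp_perm[of lo k] unfolding \<pi>_def
            by (auto simp: evenperm_comp permutation_swap_id evenperm_swap)
          show ?thesis unfolding good_def True fst_conv snd_conv
          proof (intro conjI allI impI)
            show "h permutes S2" using perm_sub[OF hp] I1 S by auto
            show "h ` S1 = S1" using perm_sub_image[OF hp I1] .
            show "evenperm h" by fact
            fix x assume "lo + len \<le> x \<and> x \<le> R"
            then show "h x = x" using permutes_not_in[OF hp] by auto
          qed auto
        next
          case False
          then have "a \<in> set (sp fx (lo + k) k)" using less.prems sp_eq by auto
          then have "good R S1 S2 (lo + k) k a"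
            using less.IH[of k "lo + k" a] less.prems k lo0 by auto
          then show ?thesis unfolding good_def using k by auto
        qed
      next
        case False
        define h where "h = Transposition.transpose (lo+len-1) (lo+len-2) \<circ> Transposition.transpose lo (lo+1)"
        define q where "q = real (len - 1) / real len"
        have l3: "3 \<le> len" using nle n2 by auto
        have sp_eq: "sp fx lo len = sp fx lo (len - 1) @ [(h, q)]"
          using False nle n2 unfolding h_def q_def by (subst sp.simps) simp
        show ?thesis
        proof (cases "a = (h, q)")
          case True
          have T1: "Transposition.transpose (lo+len-1) (lo+len-2) permutes {lo..<lo+len}" using l3 by (intro permutes_swap_id) auto
          have T2: "Transposition.transpose lo (lo+1) permutes {lo..<lo+len}" using l3 by (intro permutes_swap_id) auto
          have hp: "h permutes {lo..<lo+len}" unfolding h_def using T1 T2 permutes_compose by auto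
          have he: "evenperm h" unfolding h_def using l3
            by (auto simp: evenperm_comp permutation_swap_id evenperm_swap)
          have q01: "0 \<le> q" "q \<le> 1" unfolding q_def using l3 by auto
          show ?thesis unfolding good_def True fst_conv snd_conv
          proof (intro conjI allI impI)
            show "h permutes S2" using perm_sub[OF hp] I1 S by auto
            show "h ` S1 = S1" using perm_sub_image[OF hp I1] .
            show "evenperm h" by fact
            fix x assume "lo + len \<le> x \<and> x \<le> R"
            then show "h x = x" using permutes_not_in[OF hp] by auto
          qed (use q01 in auto)
        next
          case False
          then have "a \<in> set (sp fx lo (len - 1))" using less.prems sp_eq by auto
          moreover have "len \<noteq> 4" using \<open>odd len\<close> by auto
          then have "lo0 \<le> lo \<or> 4 \<le> len - 1" using less.prems l3 by auto
          ultimately have "good R S1 S2 lo (len - 1) a"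
            using less.IH[of "len - 1" lo a] less.prems l3 by auto
          then show ?thesis unfolding good_def using l3 by auto
        qed
      qed
    qed
  qed
qed

lemma sp_inC:
  assumes fx: "fxok fx R S1 S2 lo0" and lo0: "lo0 \<le> 2" and S: "{1..R} \<subseteq> S1" "S1 \<subseteq> S2" "S2 \<subseteq> {1..n}"
    and "1 \<le> lo" "lo + len \<le> R + 1" "lo0 \<le> lo \<or> 4 \<le> len"
  shows "inC n (sp fx lo len)"
  unfolding inC_def
proof
  fix a assume "a \<in> set (sp fx lo len)"
  then have "good R S1 S2 lo len a" using sp_inv[OF fx lo0 S(1,2)] assms by blast
  then show "fst a \<in> CA n" unfolding good_def using CA_I S(3) by blast
qed

lemma inv_in_image:
  assumes "h \<in> CA n"
  shows "(inv' h j \<in> A) = (j \<in> h ` A)"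
proof
  assume "inv' h j \<in> A"
  then show "j \<in> h ` A" using CA_invr'[OF assms, of j] by (metis image_eqI)
next
  assume "j \<in> h ` A"
  then obtain a where "a \<in> A" "j = h a" by auto
  then show "inv' h j \<in> A" using CA_invl'[OF assms] by simp
qed

lemma sp_dist:
  assumes fx: "fxok fx R S1 S2 lo0" and lo0: "lo0 \<le> 2" and S: "{1..R} \<subseteq> S1" "S1 \<subseteq> S2" "S2 \<subseteq> {1..n}"
  shows "1 \<le> lo \<Longrightarrow> lo + len \<le> R + 1 \<Longrightarrow> 1 \<le> len \<Longrightarrow> (lo0 \<le> lo \<or> 4 \<le> len \<or> len = 1) \<Longrightarrow>
    PL n (sp fx lo len) [lo + len - 1] [j] = (if lo \<le> j \<and> j < lo + len then 1 / real len else 0)"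
proof (induction len arbitrary: lo j rule: less_induct)
  case (less len)
  show ?case
  proof (cases "len = 1")
    case True
    then show ?thesis by (simp add: sp.simps PL_Nil)
  next
    case False
    note n1 = False
    show ?thesis
    proof (cases "len = 2")
      case True
      then have lo: "lo0 \<le> lo" using less.prems by auto
      define h where "h = Transposition.transpose lo (lo+1) \<circ> fx lo"
      have sp_eq: "sp fx lo len = [(h, 1/2)]" using True unfolding h_def by (simp add: sp.simps)
      have hC: "h \<in> CA n" using sp_inC[OF fx lo0 S, of lo len] less.prems lo sp_eq by auto
      have F: "fx lo (lo+1) = lo+1" using fx lo less.prems True unfolding fxok_def by auto
      have "h (lo + 1) = lo" unfolding h_def using F by simp
      then show ?thesis unfolding sp_eq PL_single[OF hC] using True by auto
    next
      case False
      note n2 = False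
      have nle: "\<not> len \<le> 1" using n1 less.prems by auto
      show ?thesis
      proof (cases "even len")
        case True
        define k where "k = len div 2"
        have k: "len = 2*k" "2 \<le> k" using True nle n2 unfolding k_def by auto
        define \<pi> where "\<pi> = swp lo k"
        define h where "h = (if evenperm \<pi> then \<pi> else \<pi> \<circ> Transposition.transpose (lo + k) (lo + k + 1))"
        have sp_eq: "sp fx lo len = (h, 1/2) # sp fx (lo + k) k"
          using True nle n2 unfolding h_def \<pi>_def k_def by (subst sp.simps) simp
        have cond: "lo0 \<le> lo \<or> 4 \<le> len" using less.prems n1 by auto
        have inc: "inC n (sp fx lo len)" by (rule sp_inC[OF fx lo0 S]) (use less.prems cond in auto)
        then have hC: "h \<in> CA n" and inc': "inC n (sp fx (lo + k) k)" unfolding sp_eq by auto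
        have IH: "PL n (sp fx (lo + k) k) [lo + k + k - 1] [j'] = (if lo + k \<le> j' \<and> j' < lo + k + k then 1 / real k else 0)" for j'
          using less.IH[of k "lo + k" j'] less.prems k lo0 by auto
        have s: "lo + len - 1 = lo + k + k - 1" using k by simp
        have T: "Transposition.transpose (lo + k) (lo + k + 1) permutes {lo+k..<lo+2*k}" using k by (intro permutes_swap_id) auto
        have Timg: "Transposition.transpose (lo + k) (lo + k + 1) ` {lo+k..<lo+2*k} = {lo+k..<lo+2*k}"
          by (rule permutes_image[OF T])
        have himg: "h ` {lo+k..<lo+2*k} = {lo..<lo+k}"
        proof (cases "evenperm \<pi>")
          case True
          then have "h = \<pi>" by (simp add: h_def)
          then show ?thesis using swp_image[of lo k] unfolding \<pi>_def by simp
        next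
          case False
          then have "h = \<pi> \<circ> Transposition.transpose (lo + k) (lo + k + 1)" by (simp add: h_def)
          then have "h ` {lo+k..<lo+2*k} = \<pi> ` (Transposition.transpose (lo + k) (lo + k + 1) ` {lo+k..<lo+2*k})"
            by (simp only: image_comp)
          then show ?thesis using swp_image[of lo k] Timg unfolding \<pi>_def by simp
        qed
        have "PL n (sp fx lo len) [lo + len - 1] [j] = (1 - 1/2) * PL n (sp fx (lo + k) k) [lo + k + k - 1] [j]
            + 1/2 * PL n (sp fx (lo + k) k) [lo + k + k - 1] [inv' h j]"
          unfolding sp_eq s using PL_cons[OF inc' hC] by simp
        also have "PL n (sp fx (lo + k) k) [lo + k + k - 1] [inv' h j] = (if lo \<le> j \<and> j < lo + k then 1 / real k else 0)"
        proof -
          have "(lo + k \<le> inv' h j \<and> inv' h j < lo + k + k) = (inv' h j \<in> {lo+k..<lo+2*k})" by auto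
          also have "\<dots> = (j \<in> h ` {lo+k..<lo+2*k})" by (rule inv_in_image[OF hC])
          also have "\<dots> = (j \<in> {lo..<lo+k})" unfolding himg ..
          finally show ?thesis using IH[of "inv' h j"] by simp
        qed
        finally show ?thesis unfolding IH using k by auto
      next
        case False
        define h where "h = Transposition.transpose (lo+len-1) (lo+len-2) \<circ> Transposition.transpose lo (lo+1)"
        define q where "q = real (len - 1) / real len"
        have l3: "3 \<le> len" using nle n2 by auto
        have sp_eq: "sp fx lo len = sp fx lo (len - 1) @ [(h, q)]"
          using False nle n2 unfolding h_def q_def by (subst sp.simps) simp
        have cond: "lo0 \<le> lo \<or> 4 \<le> len" using less.prems n1 by auto
        have "len \<noteq> 4" using False by auto
        then have cond': "lo0 \<le> lo \<or> 4 \<le> len - 1" using cond l3 by auto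
        have inc: "inC n (sp fx lo len)" by (rule sp_inC[OF fx lo0 S]) (use less.prems cond in auto)
        then have hC: "h \<in> CA n" and inc': "inC n (sp fx lo (len - 1))" unfolding sp_eq by auto
        have hhi: "h (lo + len - 1) = lo + (len - 1) - 1" unfolding h_def using l3 by auto
        have IH: "PL n (sp fx lo (len - 1)) [lo + (len - 1) - 1] [j] = (if lo \<le> j \<and> j < lo + (len - 1) then 1 / real (len - 1) else 0)"
          using less.IH[of "len - 1" lo j] less.prems l3 cond' by auto
        have fixhi: "PL n (sp fx lo (len - 1)) [lo + len - 1] [j] = (if [lo + len - 1] = [j] then 1 else 0)"
        proof (rule PL_fixpt[OF inc'])
          fix a assume "a \<in> set (sp fx lo (len - 1))"
          then have "good R S1 S2 lo (len - 1) a" using sp_inv[OF fx lo0 S(1,2)] less.prems cond' l3 by auto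
          then show "fst a (lo + len - 1) = lo + len - 1" unfolding good_def using less.prems l3 by auto
        qed
        have "PL n (sp fx lo len) [lo + len - 1] [j] = (1 - q) * PL n (sp fx lo (len - 1)) [lo + len - 1] [j]
            + q * PL n (sp fx lo (len - 1)) [h (lo + len - 1)] [j]"
          unfolding sp_eq using PL_snoc[OF inc' hC] by simp
        also have "\<dots> = (1 - q) * (if j = lo + len - 1 then 1 else 0) + q * (if lo \<le> j \<and> j < lo + (len - 1) then 1 / real (len - 1) else 0)"
          unfolding fixhi hhi IH by auto
        also have "\<dots> = (if lo \<le> j \<and> j < lo + len then 1 / real len else 0)"
        proof -
          have len0: "real len > 0" "real (len - 1) > 0" using l3 by auto
          have "1 - q = 1 / real len" unfolding q_def using len0 l3 by (simp add: field_simps of_nat_diff)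
          moreover have "q * (1 / real (len - 1)) = 1 / real len" unfolding q_def using len0 by simp
          ultimately show ?thesis using l3 by auto
        qed
        finally show ?thesis .
      qed
    qed
  qed
qed

lemma level_step:
  assumes AC: "inC n A" and BC: "inC n B" and m: "2 \<le> m"
    and A1: "\<And>a. a \<in> set A \<Longrightarrow> fst a ` {1..m} = {1..m}"
    and B1: "\<And>a. a \<in> set B \<Longrightarrow> fst a m = m"
    and QA: "\<And>j. 1 \<le> j \<Longrightarrow> j \<le> m \<Longrightarrow> PL n A [m] [j] = 1 / real m"
    and PB: "\<And>t. length t = m - 1 \<Longrightarrow> set t = {1..m-1} \<Longrightarrow> PL n B [1..<m] t = c"
    and t: "length t = m" "set t = {1..m}"
  shows "PL n (A @ B) [1..<Suc m] t = c / real m"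
proof -
  have "t \<noteq> []" using t m by auto
  then obtain t' b where tb: "t = t' @ [b]" by (metis append_butlast_last_id)
  have dist: "distinct t" using t by (simp add: card_distinct)
  have b: "b \<in> {1..m}" "b \<notin> set t'" using t dist tb by auto
  have st': "set t' = {1..m} - {b}" using t tb b by auto
  have lt': "length t' = m - 1" using t tb by simp
  have split: "[1..<Suc m] = [1..<m] @ [m]" using m by simp
  let ?DA = "DL (alt_group n) A"
  have "PL n (A @ B) [1..<Suc m] t = (\<Sum>z\<in>CA n. ?DA z * PL n B [1..<Suc m] (map (inv' z) t))"
    by (rule PL_append[OF AC BC])
  also have "\<dots> = (\<Sum>z\<in>CA n. c * (?DA z * (if map z [m] = [b] then 1 else 0)))"
  proof (intro sum.cong refl)
    fix z assume z: "z \<in> CA n"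
    show "?DA z * PL n B [1..<Suc m] (map (inv' z) t) = c * (?DA z * (if map z [m] = [b] then 1 else 0))"
    proof (cases "?DA z = 0")
      case True then show ?thesis by simp
    next
      case False
      have zimg: "z ` {1..m} = {1..m}"
        by (rule DL_support_img[OF False AC A1])
      have izimg: "inv' z ` {1..m} = {1..m}"
      proof -
        have "inv' z ` (z ` {1..m}) = {1..m}" using CA_invl'[OF z] by (simp add: image_comp)
        then show ?thesis using zimg by simp
      qed
      have lenEq: "length [1..<m] = length (map (inv' z) t')" using lt' by simp
      have "PL n B [1..<Suc m] (map (inv' z) t) = PL n B ([1..<m] @ [m]) (map (inv' z) t' @ [inv' z b])"
        unfolding split tb by simp
      also have "\<dots> = (if inv' z b = m then PL n B [1..<m] (map (inv' z) t') else 0)"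
        by (rule PL_split_fix[OF BC B1 lenEq])
      also have "\<dots> = (if z m = b then c else 0)"
      proof (cases "z m = b")
        case True
        then have e: "inv' z b = m" using CA_invl'[OF z] by auto
        have "set (map (inv' z) t') = inv' z ` ({1..m} - {b})" using st' by simp
        also have "\<dots> = inv' z ` {1..m} - {inv' z b}"
          using inj_on_subset[OF CA_inj[OF CA_inv[OF z]]] by (simp add: image_set_diff CA_inj[OF CA_inv[OF z]])
        also have "\<dots> = {1..m-1}" using izimg e m by auto
        finally have "PL n B [1..<m] (map (inv' z) t') = c" using PB[of "map (inv' z) t'"] lt' by simp
        then show ?thesis using e True by simp
      next
        case False
        then have "inv' z b \<noteq> m" using CA_invr'[OF z, of b] by auto
        then show ?thesis using False by simp
      qed
      finally show ?thesis by simp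
    qed
  qed
  also have "\<dots> = c * PL n A [m] [b]" unfolding PL_def by (simp add: sum_distrib_left)
  also have "\<dots> = c / real m" using QA[of b] b by simp
  finally show ?thesis .
qed

definition fxl :: "nat \<Rightarrow> nat \<Rightarrow> nat \<Rightarrow> nat" where "fxl n lo = Transposition.transpose (n - 1) n"
definition fxt :: "nat \<Rightarrow> nat \<Rightarrow> nat" where "fxt lo = Transposition.transpose lo (lo - 1)"

lemma fxl_ok:
  assumes "m + 2 \<le> n"
  shows "fxok (fxl n) m {1..m} ({1..m} \<union> {n-1, n}) 1"
  unfolding fxok_def fxl_def
proof (intro allI impI conjI)
  show "permutation (Transposition.transpose (n - 1) n)" by (rule permutation_swap_id)
  show "\<not> evenperm (Transposition.transpose (n - 1) n)" using assms by (simp add: evenperm_swap)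
  have "Transposition.transpose (n - 1) n ` {1..m} = id ` {1..m}"
    by (rule image_cong) (use assms in auto)
  then show "Transposition.transpose (n - 1) n ` {1..m} = {1..m}" by simp
  show "Transposition.transpose (n - 1) n permutes {1..m} \<union> {n - 1, n}" by (rule permutes_swap_id) auto
  fix lo x assume "lo + 1 \<le> x \<and> x \<le> m"
  then show "Transposition.transpose (n - 1) n x = x" using assms by auto
qed

lemma fxt_ok: "fxok fxt R {1..R} {1..R} 2"
  unfolding fxok_def fxt_def
proof (intro allI impI conjI)
  fix lo assume lo: "2 \<le> lo" "lo + 1 \<le> R"
  show "permutation (Transposition.transpose lo (lo - 1))" by (rule permutation_swap_id)
  show "\<not> evenperm (Transposition.transpose lo (lo - 1))" using lo by (simp add: evenperm_swap)
  have T: "Transposition.transpose lo (lo - 1) permutes {1..R}" using lo by (intro permutes_swap_id) auto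
  then show "Transposition.transpose lo (lo - 1) ` {1..R} = {1..R}" by (rule permutes_image)
  show "Transposition.transpose lo (lo - 1) permutes {1..R}" by fact
  fix x assume "lo + 1 \<le> x \<and> x \<le> R"
  then show "Transposition.transpose lo (lo - 1) x = x" using lo by auto
qed

definition okL :: "nat \<Rightarrow> ((nat \<Rightarrow> nat) \<times> real) list \<Rightarrow> bool" where
  "okL n L \<longleftrightarrow> inC n L \<and> (\<forall>a\<in>set L. 0 \<le> snd a \<and> snd a \<le> 1)"

definition blk :: "nat \<Rightarrow> nat \<Rightarrow> ((nat \<Rightarrow> nat) \<times> real) list" where
  "blk n m = sp (fxl n) 1 m"

fun lowL :: "nat \<Rightarrow> nat \<Rightarrow> ((nat \<Rightarrow> nat) \<times> real) list" where
  "lowL n 0 = []"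
| "lowL n (Suc m) = (if m = 0 then [] else blk n (Suc m) @ lowL n m)"

lemma blk_facts:
  assumes "m + 2 \<le> n" "1 \<le> m"
  shows "okL n (blk n m)"
    "\<And>a. a \<in> set (blk n m) \<Longrightarrow> fst a permutes ({1..m} \<union> {n-1, n}) \<and> fst a ` {1..m} = {1..m}"
    "\<And>j. 1 \<le> j \<Longrightarrow> j \<le> m \<Longrightarrow> PL n (blk n m) [m] [j] = 1 / real m"
proof -
  have ok: "fxok (fxl n) m {1..m} ({1..m} \<union> {n-1, n}) 1" by (rule fxl_ok) fact
  have S: "{1..m} \<subseteq> {1..m}" "{1..m} \<subseteq> {1..m} \<union> {n-1, n}" "{1..m} \<union> {n-1, n} \<subseteq> {1..n}"
    using assms by auto
  have g: "good m {1..m} ({1..m} \<union> {n-1, n}) 1 m a" if "a \<in> set (blk n m)" for a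
    using sp_inv[OF ok _ S(1,2)] that assms unfolding blk_def by auto
  show "okL n (blk n m)" unfolding okL_def
    using sp_inC[OF ok _ S, of 1 m] g assms unfolding blk_def good_def by auto
  show "\<And>a. a \<in> set (blk n m) \<Longrightarrow> fst a permutes ({1..m} \<union> {n-1, n}) \<and> fst a ` {1..m} = {1..m}"
    using g unfolding good_def by auto
  fix j assume "1 \<le> j" "j \<le> m"
  then show "PL n (blk n m) [m] [j] = 1 / real m"
    using sp_dist[OF ok _ S, of 1 m j] assms unfolding blk_def by auto
qed

lemma low_main:
  assumes "m + 2 \<le> n" "1 \<le> m"
  shows "okL n (lowL n m) \<and> (\<forall>a\<in>set (lowL n m). fst a permutes ({1..m} \<union> {n-1, n}) \<and> fst a ` {1..m} = {1..m})
     \<and> (\<forall>t. length t = m \<and> set t = {1..m} \<longrightarrow> PL n (lowL n m) [1..<Suc m] t = 1 / fact m)"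
  using assms
proof (induction m)
  case 0 then show ?case by simp
next
  case (Suc m)
  show ?case
  proof (cases "m = 0")
    case True
    have "PL n (lowL n (Suc m)) [1..<Suc (Suc m)] t = 1 / fact (Suc m)" if "length t = Suc m" "set t = {1..Suc m}" for t
    proof -
      have "t = [1]" using that True by (cases t) auto
      then show ?thesis using True by (simp add: PL_Nil)
    qed
    then show ?thesis using True by (simp add: okL_def)
  next
    case False
    have IH: "okL n (lowL n m)" "\<And>a. a \<in> set (lowL n m) \<Longrightarrow> fst a permutes ({1..m} \<union> {n-1, n}) \<and> fst a ` {1..m} = {1..m}"
      "\<And>t. length t = m \<Longrightarrow> set t = {1..m} \<Longrightarrow> PL n (lowL n m) [1..<Suc m] t = 1 / fact m"
      using Suc False by auto
    have L: "lowL n (Suc m) = blk n (Suc m) @ lowL n m" using False by simp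
    have m1: "1 \<le> Suc m" by simp
    note B = blk_facts[OF Suc.prems(1) m1]
    have fixm: "fst a (Suc m) = Suc m" if "a \<in> set (lowL n m)" for a
    proof -
      have "fst a permutes ({1..m} \<union> {n-1, n})" using IH(2)[OF that] by blast
      moreover have "Suc m \<notin> {1..m} \<union> {n-1, n}" using Suc.prems by auto
      ultimately show ?thesis by (rule permutes_not_in)
    qed
    have P: "PL n (lowL n (Suc m)) [1..<Suc (Suc m)] t = 1 / fact (Suc m)" if "length t = Suc m" "set t = {1..Suc m}" for t
    proof -
      have "PL n (blk n (Suc m) @ lowL n m) [1..<Suc (Suc m)] t = (1 / fact m) / real (Suc m)"
      proof (rule level_step)
        show "inC n (blk n (Suc m))" using B(1) by (simp add: okL_def)
        show "inC n (lowL n m)" using IH(1) by (simp add: okL_def)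
        show "2 \<le> Suc m" using False by simp
        show "\<And>a. a \<in> set (blk n (Suc m)) \<Longrightarrow> fst a ` {1..Suc m} = {1..Suc m}" using B(2) by blast
        show "\<And>a. a \<in> set (lowL n m) \<Longrightarrow> fst a (Suc m) = Suc m" by (rule fixm)
        show "\<And>j. 1 \<le> j \<Longrightarrow> j \<le> Suc m \<Longrightarrow> PL n (blk n (Suc m)) [Suc m] [j] = 1 / real (Suc m)"
          using B(3) by blast
        show "\<And>t. length t = Suc m - 1 \<Longrightarrow> set t = {1..Suc m - 1} \<Longrightarrow> PL n (lowL n m) [1..<Suc m] t = 1 / fact m"
          using IH(3) by simp
      qed (use that in auto)
      note H = this
      have e: "(1 / fact m) / real (Suc m) = 1 / (fact (Suc m) :: real)" by (simp add: field_simps)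
      show ?thesis unfolding L using H e by (simp only:)
    qed
    have okl: "okL n (lowL n (Suc m))" using L B(1) IH(1) by (auto simp: okL_def)
    have sets: "fst a permutes ({1..Suc m} \<union> {n-1, n}) \<and> fst a ` {1..Suc m} = {1..Suc m}" if "a \<in> set (lowL n (Suc m))" for a
    proof (cases "a \<in> set (blk n (Suc m))")
      case True then show ?thesis using B(2) by blast
    next
      case False
      then have a: "a \<in> set (lowL n m)" using that L by auto
      have "fst a permutes ({1..Suc m} \<union> {n-1, n})"
        by (rule perm_sub[OF conjunct1[OF IH(2)[OF a]]]) auto
      moreover have "{1..Suc m} = insert (Suc m) {1..m}" by auto
      then have "fst a ` {1..Suc m} = {1..Suc m}" using IH(2)[OF a] fixm[OF a] by simp
      ultimately show ?thesis by simp
    qed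
    show ?thesis using okl sets P by blast
  qed
qed

definition T1 :: "nat \<Rightarrow> ((nat \<Rightarrow> nat) \<times> real) list" where "T1 n = sp fxt 1 n"
definition T2 :: "nat \<Rightarrow> ((nat \<Rightarrow> nat) \<times> real) list" where "T2 n = sp fxt 1 (n - 1)"

lemma top_facts:
  assumes n: "5 \<le> n"
  shows "okL n (T1 n)" "okL n (T2 n)" "\<And>a. a \<in> set (T2 n) \<Longrightarrow> fst a n = n"
    "\<And>j. PL n (T1 n) [n] [j] = (if 1 \<le> j \<and> j \<le> n then 1 / real n else 0)"
    "\<And>j. PL n (T2 n) [n - 1] [j] = (if 1 \<le> j \<and> j \<le> n - 1 then 1 / real (n - 1) else 0)"
proof -
  have ok1: "fxok fxt n {1..n} {1..n} 2" by (rule fxt_ok)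
  have ok2: "fxok fxt (n - 1) {1..n - 1} {1..n - 1} 2" by (rule fxt_ok)
  have S1: "{1..n} \<subseteq> {1..n}" "{1..n} \<subseteq> {1..n}" "{1..n} \<subseteq> {1..n}" by auto
  have S2: "{1..n - 1} \<subseteq> {1..n - 1}" "{1..n - 1} \<subseteq> {1..n - 1}" "{1..n - 1} \<subseteq> {1..n}" by auto
  have g1: "good n {1..n} {1..n} 1 n a" if "a \<in> set (T1 n)" for a
    using sp_inv[OF ok1 _ S1(1,2), of 1 n a] that n unfolding T1_def by auto
  have g2: "good (n - 1) {1..n - 1} {1..n - 1} 1 (n - 1) a" if "a \<in> set (T2 n)" for a
    using sp_inv[OF ok2 _ S2(1,2), of 1 "n - 1" a] that n unfolding T2_def by auto
  show "okL n (T1 n)" unfolding okL_def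
    using sp_inC[OF ok1 _ S1, of 1 n] g1 n unfolding T1_def good_def by auto
  show "okL n (T2 n)" unfolding okL_def
    using sp_inC[OF ok2 _ S2, of 1 "n - 1"] g2 n unfolding T2_def good_def by auto
  show "\<And>a. a \<in> set (T2 n) \<Longrightarrow> fst a n = n"
  proof -
    fix a assume "a \<in> set (T2 n)"
    then have "fst a permutes {1..n - 1}" using g2 unfolding good_def by auto
    then show "fst a n = n" using n by (intro permutes_not_in) auto
  qed
  fix j
  show "PL n (T1 n) [n] [j] = (if 1 \<le> j \<and> j \<le> n then 1 / real n else 0)"
    using sp_dist[OF ok1 _ S1, of 1 n j] n unfolding T1_def by auto
  have d: "PL n (sp fxt 1 (n-1)) [1 + (n-1) - 1] [j] = (if 1 \<le> j \<and> j < 1 + (n-1) then 1 / real (n-1) else 0)"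
    by (rule sp_dist[OF ok2 _ S2]) (use n in auto)
  have e1: "1 + (n-1) - 1 = n - 1" "1 + (n - 1) = n" using n by auto
  have ce: "(1 \<le> j \<and> j < n) = (1 \<le> j \<and> j \<le> n - 1)" using n by auto
  show "PL n (T2 n) [n - 1] [j] = (if 1 \<le> j \<and> j \<le> n - 1 then 1 / real (n - 1) else 0)"
    unfolding T2_def using d unfolding e1 ce .
qed

lemma top_pair:
  assumes n: "5 \<le> n" and ab: "a \<noteq> b" "a \<in> {1..n}" "b \<in> {1..n}"
  shows "PL n (T1 n @ T2 n) [n - 1, n] [a, b] = 1 / (real n * real (n - 1))"
proof -
  note F = top_facts[OF n]
  have C1: "inC n (T1 n)" and C2: "inC n (T2 n)" using F(1,2) by (auto simp: okL_def)
  let ?D = "DL (alt_group n) (T1 n)"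
  have "PL n (T1 n @ T2 n) [n - 1, n] [a, b] = (\<Sum>z\<in>CA n. ?D z * PL n (T2 n) [n - 1, n] (map (inv' z) [a, b]))"
    by (rule PL_append[OF C1 C2])
  also have "\<dots> = (\<Sum>z\<in>CA n. (?D z * (if map z [n] = [b] then 1 else 0)) * (1 / real (n - 1)))"
  proof (intro sum.cong refl)
    fix z assume z: "z \<in> CA n"
    have lenEq: "length [n - 1] = length [inv' z a]" by simp
    have "PL n (T2 n) [n - 1, n] (map (inv' z) [a, b]) = PL n (T2 n) ([n - 1] @ [n]) ([inv' z a] @ [inv' z b])"
      by simp
    also have "\<dots> = (if inv' z b = n then PL n (T2 n) [n - 1] [inv' z a] else 0)"
      by (rule PL_split_fix[OF C2 F(3) lenEq])
    also have "\<dots> = (if z n = b then 1 / real (n - 1) else 0)"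
    proof (cases "z n = b")
      case True
      then have e: "inv' z b = n" using CA_invl'[OF z] by auto
      have "inv' z a \<in> {1..n}" using permutes_in_image[OF CA_perm[OF CA_inv[OF z]]] ab by auto
      moreover have "inv' z a \<noteq> n" using ab True CA_invr'[OF z, of a] by auto
      ultimately have "1 \<le> inv' z a \<and> inv' z a \<le> n - 1" by auto
      then show ?thesis using e True F(5)[of "inv' z a"] by simp
    next
      case False
      then have "inv' z b \<noteq> n" using CA_invr'[OF z, of b] by auto
      then show ?thesis using False by simp
    qed
    finally show "?D z * PL n (T2 n) [n - 1, n] (map (inv' z) [a, b]) = (?D z * (if map z [n] = [b] then 1 else 0)) * (1 / real (n - 1))"
      by simp
  qed
  also have "\<dots> = PL n (T1 n) [n] [b] * (1 / real (n - 1))"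
    unfolding PL_def by (simp add: sum_divide_distrib)
  also have "\<dots> = 1 / (real n * real (n - 1))" using F(4)[of b] ab by simp
  finally show ?thesis .
qed

lemma pairset:
  assumes x: "x \<in> CA n" and z: "z \<in> CA n" and n: "2 \<le> n"
  shows "((inv' z \<circ> x) ` {1..n-2} = {1..n-2}) =
     ((z (n-1) = x (n-1) \<and> z n = x n) \<or> (z (n-1) = x n \<and> z n = x (n-1)))"
proof -
  define g where "g = inv' z \<circ> x"
  have gC: "g \<in> CA n" unfolding g_def by (rule CA_comp[OF CA_inv[OF z] x])
  have gi: "g ` {1..n} = {1..n}" using permutes_image[OF CA_perm[OF gC]] .
  have inj: "inj g" by (rule CA_inj[OF gC])
  have U: "{1..n} = {1..n-2} \<union> {n-1, n}" "{1..n-2} \<inter> {n-1, n} = {}" using n by auto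
  have D1: "{n-1, n} = {1..n} - {1..n-2}" using U by auto
  have D2: "{1..n-2} = {1..n} - {n-1, n}" using U by auto
  have "(g ` {1..n-2} = {1..n-2}) = (g ` {n-1, n} = {n-1, n})"
  proof
    assume "g ` {1..n-2} = {1..n-2}"
    then have "g ` ({1..n} - {1..n-2}) = {1..n} - {1..n-2}" using gi inj by (simp add: image_set_diff)
    then show "g ` {n-1, n} = {n-1, n}" using D1 by simp
  next
    assume "g ` {n-1, n} = {n-1, n}"
    then have "g ` ({1..n} - {n-1, n}) = {1..n} - {n-1, n}" using gi inj by (simp add: image_set_diff)
    then show "g ` {1..n-2} = {1..n-2}" using D2 by simp
  qed
  also have "\<dots> = ({g (n-1), g n} = {n-1, n})" by simp
  also have "\<dots> = ((g (n-1) = n-1 \<and> g n = n) \<or> (g (n-1) = n \<and> g n = n-1))" by (rule doubleton_eq_iff)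
  also have "\<dots> = ((z (n-1) = x (n-1) \<and> z n = x n) \<or> (z (n-1) = x n \<and> z n = x (n-1)))"
  proof -
    have e: "(g y = c) = (x y = z c)" for y c
      unfolding g_def using CA_invl'[OF z] CA_invr'[OF z] by (auto simp: comp_def)
    show ?thesis unfolding e by auto
  qed
  finally show ?thesis unfolding g_def .
qed

lemma unique_perm:
  assumes x: "x \<in> CA n" and y: "y \<in> CA n" and n: "2 \<le> n" and agree: "\<And>i. i \<in> {1..n-2} \<Longrightarrow> y i = x i"
  shows "y = x"
proof -
  have "(inv' x \<circ> y) ` {1..n-2} = {1..n-2}"
  proof -
    have "(inv' x \<circ> y) ` {1..n-2} = id ` {1..n-2}"
      by (rule image_cong) (use agree CA_invl'[OF x] in auto)
    then show ?thesis by simp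
  qed
  then have c: "(x (n-1) = y (n-1) \<and> x n = y n) \<or> (x (n-1) = y n \<and> x n = y (n-1))"
    using pairset[OF y x n] by simp
  have out: "\<And>i. i \<notin> {1..n} \<Longrightarrow> x i = i \<and> y i = i"
    using permutes_not_in[OF CA_perm[OF x]] permutes_not_in[OF CA_perm[OF y]] by auto
  have all: "\<And>i. i \<in> {1..n} \<Longrightarrow> i \<in> {1..n-2} \<or> i = n - 1 \<or> i = n" using n by auto
  show ?thesis
  proof (cases "x (n-1) = y (n-1) \<and> x n = y n")
    case True
    show ?thesis
    proof
      fix i show "y i = x i"
      proof (cases "i \<in> {1..n}")
        case True then show ?thesis using all[OF True] agree \<open>x (n-1) = y (n-1) \<and> x n = y n\<close> by auto
      next
        case False then show ?thesis using out by auto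
      qed
    qed
  next
    case False
    then have sw: "x (n-1) = y n" "x n = y (n-1)" using c by auto
    have "y = x \<circ> Transposition.transpose (n-1) n"
    proof
      fix i show "y i = (x \<circ> Transposition.transpose (n-1) n) i"
      proof (cases "i \<in> {1..n}")
        case True
        then show ?thesis using all[OF True] agree sw n by (auto simp: transpose_def)
      next
        case False
        then have "i \<noteq> n - 1" "i \<noteq> n" using n by auto
        then show ?thesis using out[OF False] by simp
      qed
    qed
    moreover have "evenperm x" "evenperm y" using x y by (auto simp: alt_group_carrier)
    moreover have "permutation x" using CA_perm[OF x] permutation_permutes by blast
    ultimately have False using n by (simp add: evenperm_comp permutation_swap_id evenperm_swap)
    then show ?thesis ..
  qed
qed

lemma final_uniform:
  assumes n: "5 \<le> n" and x: "x \<in> CA n"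
  shows "DL (alt_group n) (T1 n @ T2 n @ lowL n (n - 2)) x = 2 / fact n"
proof -
  let ?T = "T1 n @ T2 n" and ?low = "lowL n (n - 2)" and ?s = "[1..<n-1]"
  have LM: "okL n ?low \<and> (\<forall>a\<in>set ?low. fst a permutes ({1..n-2} \<union> {n-1, n}) \<and> fst a ` {1..n-2} = {1..n-2})
     \<and> (\<forall>t. length t = n - 2 \<and> set t = {1..n-2} \<longrightarrow> PL n ?low [1..<Suc (n-2)] t = 1 / fact (n - 2))"
    by (rule low_main) (use n in auto)
  have sucn: "Suc (n - 2) = n - 1" using n by simp
  have lowC: "inC n ?low" using LM by (simp add: okL_def)
  have lowimg: "\<And>a. a \<in> set ?low \<Longrightarrow> fst a ` {1..n-2} = {1..n-2}" using LM by blast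
  have lowval: "\<And>t. length t = n - 2 \<Longrightarrow> set t = {1..n-2} \<Longrightarrow> PL n ?low ?s t = 1 / fact (n - 2)"
    using LM unfolding sucn by blast
  note F = top_facts[OF n]
  have TC: "inC n ?T" using F(1,2) by (simp add: okL_def)
  have sset: "set ?s = {1..n-2}" using n by auto
  have "DL (alt_group n) (?T @ ?low) x = PL n (?T @ ?low) ?s (map x ?s)"
  proof -
    have "PL n (?T @ ?low) ?s (map x ?s) = (\<Sum>y\<in>CA n. if y = x then DL (alt_group n) (?T @ ?low) y else 0)"
      unfolding PL_def
    proof (intro sum.cong refl)
      fix y assume y: "y \<in> CA n"
      have "(map y ?s = map x ?s) = (y = x)"
      proof
        assume "map y ?s = map x ?s"
        then have agr: "\<And>i. i \<in> {1..n-2} \<Longrightarrow> y i = x i" using sset by (simp add: map_eq_conv)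
        have n2: "2 \<le> n" using n by simp
        show "y = x" by (rule unique_perm[OF x y n2 agr])
      qed simp
      then show "DL (alt_group n) (?T @ ?low) y * (if map y ?s = map x ?s then 1 else 0) = (if y = x then DL (alt_group n) (?T @ ?low) y else 0)"
        by simp
    qed
    also have "\<dots> = DL (alt_group n) (?T @ ?low) x" using x CA_finite by (simp add: sum.delta)
    finally show ?thesis by simp
  qed
  also have "\<dots> = (\<Sum>z\<in>CA n. DL (alt_group n) ?T z * PL n ?low ?s (map (inv' z) (map x ?s)))"
    by (rule PL_append[OF TC lowC])
  also have "\<dots> = (\<Sum>z\<in>CA n. (1 / fact (n - 2)) * (DL (alt_group n) ?T z * (if map z [n-1, n] = [x (n-1), x n] then 1 else 0))
      + (1 / fact (n - 2)) * (DL (alt_group n) ?T z * (if map z [n-1, n] = [x n, x (n-1)] then 1 else 0)))"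
  proof (intro sum.cong refl)
    fix z assume z: "z \<in> CA n"
    have xne: "x (n-1) \<noteq> x n"
    proof
      assume "x (n-1) = x n"
      then have "n - 1 = n" by (rule injD[OF CA_inj[OF x]])
      then show False using n by simp
    qed
    have "set (map (inv' z) (map x ?s)) = inv' z ` x ` set ?s" by (simp only: set_map)
    also have "\<dots> = (inv' z \<circ> x) ` set ?s" by (simp only: image_comp)
    finally have st: "set (map (inv' z) (map x ?s)) = (inv' z \<circ> x) ` {1..n-2}" unfolding sset .
    have lt: "length (map (inv' z) (map x ?s)) = n - 2" by (simp only: length_map length_upt)
    have c1: "(map z [n-1, n] = [x (n-1), x n]) = (z (n-1) = x (n-1) \<and> z n = x n)" by simp
    have c2: "(map z [n-1, n] = [x n, x (n-1)]) = (z (n-1) = x n \<and> z n = x (n-1))" by simp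
    have n2: "2 \<le> n" using n by simp
    let ?c1 = "z (n-1) = x (n-1) \<and> z n = x n" and ?c2 = "z (n-1) = x n \<and> z n = x (n-1)"
    have ex: "\<not> (?c1 \<and> ?c2)" using xne by auto
    show "DL (alt_group n) ?T z * PL n ?low ?s (map (inv' z) (map x ?s)) =
      (1 / fact (n - 2)) * (DL (alt_group n) ?T z * (if map z [n-1, n] = [x (n-1), x n] then 1 else 0))
      + (1 / fact (n - 2)) * (DL (alt_group n) ?T z * (if map z [n-1, n] = [x n, x (n-1)] then 1 else 0))"
    proof (cases "(inv' z \<circ> x) ` {1..n-2} = {1..n-2}")
      case True
      have "set (map (inv' z) (map x ?s)) = {1..n-2}" unfolding st by (rule True)
      then have P: "PL n ?low ?s (map (inv' z) (map x ?s)) = 1 / fact (n - 2)" by (rule lowval[OF lt])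
      have "?c1 \<or> ?c2" using True unfolding pairset[OF x z n2] .
      then show ?thesis
      proof
        assume h: ?c1
        then have e1: "(if ?c1 then 1 else 0) = (1::real)" by (rule if_P)
        have "\<not> ?c2" using h ex by blast
        then have e2: "(if ?c2 then 1 else 0) = (0::real)" by (rule if_not_P)
        show ?thesis unfolding P c1 c2 e1 e2 by simp
      next
        assume h: ?c2
        then have e2: "(if ?c2 then 1 else 0) = (1::real)" by (rule if_P)
        have "\<not> ?c1" using h ex by blast
        then have e1: "(if ?c1 then 1 else 0) = (0::real)" by (rule if_not_P)
        show ?thesis unfolding P c1 c2 e1 e2 by simp
      qed
    next
      case False
      have "set (map (inv' z) (map x ?s)) \<noteq> {1..n-2}" unfolding st by (rule False)
      note ne = this
      have P: "PL n ?low ?s (map (inv' z) (map x ?s)) = 0"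
        using PL_set_zero[OF lowC lowimg sset ne] .
      have "\<not> (?c1 \<or> ?c2)" using False unfolding pairset[OF x z n2] .
      then have n1: "\<not> ?c1" and n2': "\<not> ?c2" by blast+
      have e1: "(if ?c1 then 1 else 0) = (0::real)" using n1 by (rule if_not_P)
      have e2: "(if ?c2 then 1 else 0) = (0::real)" using n2' by (rule if_not_P)
      show ?thesis unfolding P c1 c2 e1 e2 by simp
    qed
  qed
  also have "\<dots> = (1 / fact (n - 2)) * (PL n ?T [n-1, n] [x (n-1), x n] + PL n ?T [n-1, n] [x n, x (n-1)])"
    unfolding PL_def by (simp add: sum.distrib sum_distrib_left distrib_left)
  also have "\<dots> = (1 / fact (n - 2)) * (2 / (real n * real (n - 1)))"
  proof -
    have xi: "x (n-1) \<in> {1..n}" "x n \<in> {1..n}"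
      using permutes_in_image[OF CA_perm[OF x]] n by auto
    have xne: "x (n-1) \<noteq> x n"
    proof
      assume "x (n-1) = x n"
      then have "n - 1 = n" by (rule injD[OF CA_inj[OF x]])
      then show False using n by simp
    qed
    show ?thesis using top_pair[OF n xne xi] top_pair[OF n xne[symmetric] xi(2,1)] by simp
  qed
  also have "\<dots> = 2 / fact n"
  proof -
    define k where "k = n - 2"
    have k: "n = Suc (Suc k)" using n unfolding k_def by simp
    show ?thesis unfolding k by (simp add: field_simps)
  qed
  finally show ?thesis by simp
qed

function fcost :: "nat \<Rightarrow> nat" where
  "fcost len = (if len \<le> 1 then 0 else if even len then fcost (len div 2) + 1 else fcost (len - 1) + 1)"
  by pat_completeness auto
termination by (relation "Wellfounded.measure id") auto

function flg :: "nat \<Rightarrow> nat" where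
  "flg m = (if m \<le> 1 then 0 else flg (m div 2) + 1)"
  by pat_completeness auto
termination by (relation "Wellfounded.measure id") auto

declare fcost.simps[simp del] flg.simps[simp del]

lemma length_sp: "length (sp fx lo len) = fcost len"
proof (induction len arbitrary: lo rule: less_induct)
  case (less len)
  show ?case
  proof (cases "len \<le> 1")
    case True then show ?thesis by (simp add: sp.simps fcost.simps)
  next
    case False
    show ?thesis
    proof (cases "len = 2")
      case True
      then show ?thesis by (simp add: sp.simps fcost.simps)
    next
      case n2: False
      show ?thesis
      proof (cases "even len")
        case True
        have "length (sp fx lo len) = Suc (length (sp fx (lo + len div 2) (len div 2)))"
          using True False n2 by (subst sp.simps) simp
        also have "\<dots> = Suc (fcost (len div 2))" using less.IH[of "len div 2"] False by simp
        also have "\<dots> = fcost len" using True False by (subst (2) fcost.simps) simp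
        finally show ?thesis .
      next
        case odd: False
        have "length (sp fx lo len) = Suc (length (sp fx lo (len - 1)))"
          using odd False n2 by (subst sp.simps) simp
        also have "\<dots> = Suc (fcost (len - 1))" using less.IH[of "len - 1"] False by simp
        also have "\<dots> = fcost len" using odd False by (subst (2) fcost.simps) simp
        finally show ?thesis .
      qed
    qed
  qed
qed

lemma length_lowL: "length (lowL n m) = (\<Sum>i\<in>{2..m}. fcost i)"
proof (induction m)
  case 0 then show ?case by simp
next
  case (Suc m)
  show ?case
  proof (cases "m = 0")
    case True then show ?thesis by simp
  next
    case False
    have "{2..Suc m} = insert (Suc m) {2..m}" using False by auto
    then show ?thesis using Suc False by (simp add: blk_def length_sp)
  qed
qed

lemma fcost_0: "fcost 0 = 0" by (subst fcost.simps) simp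
lemma fcost_1: "fcost (Suc 0) = 0" by (subst fcost.simps) simp
lemma flg_1: "flg (Suc 0) = 0" by (subst flg.simps) simp
lemmas fcost_01 = fcost_0 fcost_1

lemma length_total:
  assumes "5 \<le> n"
  shows "length (T1 n @ T2 n @ lowL n (n - 2)) = (\<Sum>i\<in>{1..n}. fcost i)"
proof -
  have "{1..n} = insert n (insert (n - 1) (insert 1 {2..n-2}))" using assms by auto
  moreover have "n \<notin> insert (n - 1) (insert 1 {2..n-2})" "n - 1 \<notin> insert 1 {2..n-2}" "1 \<notin> {2..n-2}"
    using assms by auto
  ultimately have "(\<Sum>i\<in>{1..n}. fcost i) = fcost n + fcost (n - 1) + (\<Sum>i\<in>{2..n-2}. fcost i)"
    by (simp add: fcost_1)
  then show ?thesis by (simp add: T1_def T2_def length_sp length_lowL)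
qed

lemma flg_pow: "1 \<le> m \<Longrightarrow> 2 ^ flg m \<le> m"
proof (induction m rule: less_induct)
  case (less m)
  show ?case
  proof (cases "m \<le> 1")
    case True then show ?thesis using less.prems by (simp add: flg.simps)
  next
    case False
    have "flg m = flg (m div 2) + 1" using False by (simp add: flg.simps)
    moreover have "2 ^ flg (m div 2) \<le> m div 2" using less.IH[of "m div 2"] False by simp
    ultimately show ?thesis by simp
  qed
qed

definition gg :: "nat \<Rightarrow> int" where "gg m = 2 * int (fcost m) - 3 * int (flg m) - 1"
definition GG :: "nat \<Rightarrow> int" where "GG n = (\<Sum>m\<in>{1..n}. gg m)"

lemma gg_even: "1 \<le> j \<Longrightarrow> gg (2 * j) = gg j - 1"
proof -
  assume j: "1 \<le> j"
  have "fcost (2 * j) = fcost j + 1" using j by (subst fcost.simps) simp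
  moreover have "flg (2 * j) = flg j + 1" using j by (subst flg.simps) simp
  ultimately show ?thesis unfolding gg_def by simp
qed

lemma gg_odd: "1 \<le> j \<Longrightarrow> gg (2 * j + 1) = gg j + 1"
proof -
  assume j: "1 \<le> j"
  have "fcost (2 * j + 1) = fcost (2 * j) + 1" using j by (subst fcost.simps) simp
  also have "fcost (2 * j) = fcost j + 1" using j by (subst fcost.simps) simp
  finally have "fcost (2 * j + 1) = fcost j + 2" by simp
  moreover have "flg (2 * j + 1) = flg j + 1" using j by (subst flg.simps) simp
  ultimately show ?thesis unfolding gg_def by simp
qed

lemma GG_Suc: "GG (Suc n) = GG n + gg (Suc n)"
  unfolding GG_def by simp

lemma GG_odd: "GG (2 * k + 1) = 2 * GG k - 1"
proof (induction k)
  case 0 then show ?case by (simp add: GG_def gg_def fcost_1 flg_1)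
next
  case (Suc k)
  have "GG (2 * Suc k + 1) = GG (2 * k + 1) + gg (2 * (k + 1)) + gg (2 * (k + 1) + 1)"
    by (simp add: GG_Suc)
  also have "\<dots> = 2 * GG k - 1 + 2 * gg (Suc k)" using Suc gg_even[of "k+1"] gg_odd[of "k+1"] by simp
  also have "\<dots> = 2 * GG (Suc k) - 1" by (simp add: GG_Suc)
  finally show ?case .
qed

lemma GG_even: "GG (2 * Suc j) = GG j + GG (Suc j) - 2"
proof -
  have "GG (2 * Suc j) = GG (Suc (2 * j + 1))" by simp
  also have "\<dots> = GG (2 * j + 1) + gg (2 * Suc j)" by (simp add: GG_Suc)
  also have "\<dots> = 2 * GG j - 1 + gg (Suc j) - 1" using GG_odd[of j] gg_even[of "Suc j"] by simp
  also have "GG (Suc j) = GG j + gg (Suc j)" by (rule GG_Suc)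
  ultimately show ?thesis by simp
qed

lemma GG_bound: "GG n \<le> (if n = 0 then 0 else -1)"
proof (induction n rule: less_induct)
  case (less n)
  show ?case
  proof (cases "n = 0")
    case True then show ?thesis by (simp add: GG_def)
  next
    case False
    show ?thesis
    proof (cases "even n")
      case True
      then obtain k where k: "n = 2 * k" by blast
      then obtain j where j: "k = Suc j" using False by (cases k) auto
      have "GG j \<le> (if j = 0 then 0 else -1)" using less.IH[of j] k j by simp
      then have a: "GG j \<le> 0" by (cases "j = 0") simp_all
      have b: "GG (Suc j) \<le> -1" using less.IH[of "Suc j"] k j by simp
      show ?thesis using GG_even[of j] a b k j by simp
    next
      case odd: False
      then obtain k where k: "n = 2 * k + 1" by (metis oddE)
      have "GG k \<le> (if k = 0 then 0 else -1)" using less.IH[of k] k by simp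
      then have "GG k \<le> 0" by (cases "k = 0") simp_all
      then show ?thesis using GG_odd[of k] k by simp
    qed
  qed
qed

lemma flg_sum_le:
  assumes "1 \<le> n"
  shows "int (\<Sum>m\<in>{1..n}. flg m) \<le> \<lfloor>log 2 (fact n)\<rfloor>"
proof -
  have "(2::nat) ^ (\<Sum>m\<in>{1..n}. flg m) = (\<Prod>m\<in>{1..n}. 2 ^ flg m)" by (rule power_sum)
  also have "\<dots> \<le> (\<Prod>m\<in>{1..n}. m)" by (rule prod_mono) (use flg_pow in auto)
  finally have le: "(2::nat) ^ (\<Sum>m\<in>{1..n}. flg m) \<le> \<Prod>{1..n}" by simp
  have "real (\<Sum>m\<in>{1..n}. flg m) = log 2 (2 ^ (\<Sum>m\<in>{1..n}. flg m))" by (simp add: log_pow_cancel)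
  also have "\<dots> \<le> log 2 (fact n)"
  proof (subst log_le_cancel_iff)
    have "(2::real) ^ (\<Sum>m\<in>{1..n}. flg m) = real ((2::nat) ^ (\<Sum>m\<in>{1..n}. flg m))" by simp
    also have "\<dots> \<le> real (\<Prod>{1..n})" using le by (simp only: of_nat_le_iff)
    also have "\<dots> = fact n" by (simp add: fact_prod)
    finally show "(2::real) ^ (\<Sum>m\<in>{1..n}. flg m) \<le> fact n" .
  qed auto
  finally show ?thesis by (simp add: le_floor_iff)
qed

lemma fcost_bound:
  assumes "1 \<le> n"
  shows "real (\<Sum>i\<in>{1..n}. fcost i) \<le> 3 / 2 * real_of_int \<lfloor>log 2 (fact n)\<rfloor> + real n / 2"
proof -
  have G: "GG n \<le> -1" using GG_bound[of n] assms by simp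
  have "GG n = 2 * int (\<Sum>i\<in>{1..n}. fcost i) - 3 * int (\<Sum>i\<in>{1..n}. flg i) - int n"
    unfolding GG_def gg_def by (simp add: sum_subtractf sum_distrib_left)
  then have "2 * int (\<Sum>i\<in>{1..n}. fcost i) \<le> 3 * int (\<Sum>i\<in>{1..n}. flg i) + int n - 1" using G by simp
  also have "\<dots> \<le> 3 * \<lfloor>log 2 (fact n)\<rfloor> + int n - 1" using flg_sum_le[OF assms] by simp
  finally have "2 * int (\<Sum>i\<in>{1..n}. fcost i) \<le> 3 * \<lfloor>log 2 (fact n)\<rfloor> + int n - 1" .
  then have "real_of_int (2 * int (\<Sum>i\<in>{1..n}. fcost i)) \<le> real_of_int (3 * \<lfloor>log 2 (fact n)\<rfloor> + int n - 1)"
    by (simp only: of_int_le_iff)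
  then show ?thesis by simp
qed

lemma card_le_pow:
  assumes "mixes_with G k" "finite (carrier G)" "carrier G \<noteq> {}"
  shows "card (carrier G) \<le> 2 ^ k"
proof -
  obtain g p where gp: "\<forall>x\<in>carrier G. subprod_prob G g p k x = 1 / real (card (carrier G))"
    using assms(1) unfolding mixes_with_def by blast
  have cpos: "card (carrier G) > 0" using assms(2,3) by (simp add: card_gt_0_iff)
  define f where "f x = (SOME S. S \<subseteq> {0..<k} \<and> subprod G g k S = x)" for x
  have fx: "f x \<subseteq> {0..<k} \<and> subprod G g k (f x) = x" if x: "x \<in> carrier G" for x
  proof -
    let ?A = "{S. S \<subseteq> {0..<k} \<and> subprod G g k S = x}"
    have "?A \<noteq> {}"
    proof
      assume e: "?A = {}"
      have "subprod_prob G g p k x = (\<Sum>S\<in>?A. \<Prod>i = 0..<k. if i \<in> S then p i else 1 - p i)"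
        unfolding subprod_prob_def by (rule refl)
      also have "\<dots> = 0" by (simp only: e sum.empty)
      finally show False using gp x cpos by simp
    qed
    then obtain S where "S \<in> ?A" by blast
    then have "\<exists>S. S \<subseteq> {0..<k} \<and> subprod G g k S = x" by blast
    then show ?thesis unfolding f_def by (rule someI_ex)
  qed
  have "inj_on f (carrier G)"
  proof (rule inj_onI)
    fix x y assume "x \<in> carrier G" "y \<in> carrier G" "f x = f y"
    then show "x = y" using fx by metis
  qed
  moreover have "f ` carrier G \<subseteq> Pow {0..<k}" using fx by auto
  ultimately have "card (carrier G) \<le> card (Pow {0..<k})" by (rule card_inj_on_le) simp
  then show ?thesis by (simp add: card_Pow)
qed

theorem mainTheorem4:
  fixes n :: nat
  assumes "n \<ge> 5"
  shows "mixable (alt_group n) \<and>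
         log 2 (fact n) - 1 \<le> real (mixlen (alt_group n)) \<and>
         real (mixlen (alt_group n)) \<le> 3 / 2 * real_of_int \<lfloor>log 2 (fact n)\<rfloor> + real n / 2"
proof -
  have n: "5 \<le> n" using assms by simp
  define L where "L = T1 n @ T2 n @ lowL n (n - 2)"
  have okT1: "okL n (T1 n)" and okT2: "okL n (T2 n)" using top_facts[OF n] by auto
  have oklow: "okL n (lowL n (n - 2))" using low_main[of "n - 2" n] n by simp
  have okl: "okL n L" using okT1 okT2 oklow unfolding L_def okL_def by auto
  have card2: "2 * card (CA n) = fact n" using alt_group_card_carrier[of n] n by simp
  have cardr: "real (card (CA n)) = fact n / 2"
  proof -
    have "real (2 * card (CA n)) = real (fact n)" using card2 by simp
    then show ?thesis by simp
  qed
  have mix: "mixes_with (alt_group n) (length L)"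
    unfolding mixes_with_def
  proof (intro exI[of _ "\<lambda>i. fst (L!i)"] exI[of _ "\<lambda>i. snd (L!i)"] conjI allI impI ballI)
    fix i assume "i < length L"
    then have "L!i \<in> set L" by simp
    then show "fst (L!i) \<in> CA n" "0 \<le> snd (L!i)" "snd (L!i) \<le> 1" using okl unfolding okL_def inC_def by auto
  next
    fix x assume x: "x \<in> CA n"
    have "subprod_prob (alt_group n) (\<lambda>i. fst (L!i)) (\<lambda>i. snd (L!i)) (length L) x = DL (alt_group n) L x"
      unfolding DL_def ..
    also have "\<dots> = 2 / fact n" unfolding L_def by (rule final_uniform[OF n x])
    also have "\<dots> = 1 / real (card (CA n))" unfolding cardr by simp
    finally show "subprod_prob (alt_group n) (\<lambda>i. fst (L!i)) (\<lambda>i. snd (L!i)) (length L) x = 1 / real (card (CA n))" .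
  qed
  have mixable: "mixable (alt_group n)" unfolding mixable_def using mix by blast
  have ml: "mixes_with (alt_group n) (mixlen (alt_group n))"
    unfolding mixlen_def by (rule LeastI[of "\<lambda>k. mixes_with (alt_group n) k", OF mix])
  have up: "mixlen (alt_group n) \<le> length L" unfolding mixlen_def by (rule Least_le[of "\<lambda>k. mixes_with (alt_group n) k", OF mix])
  have "length L = (\<Sum>i\<in>{1..n}. fcost i)" unfolding L_def by (rule length_total[OF n])
  then have upper: "real (mixlen (alt_group n)) \<le> 3 / 2 * real_of_int \<lfloor>log 2 (fact n)\<rfloor> + real n / 2"
    using up fcost_bound[of n] n by (metis (mono_tags, lifting) dual_order.trans of_nat_le_iff le_trans one_le_numeral)
  have lower: "log 2 (fact n) - 1 \<le> real (mixlen (alt_group n))"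
  proof -
    let ?k = "mixlen (alt_group n)"
    have ne: "CA n \<noteq> {}" using CA_id by blast
    have "card (CA n) \<le> 2 ^ ?k" by (rule card_le_pow[OF ml CA_finite ne])
    then have "fact n \<le> (2::nat) ^ Suc ?k" using card2 by simp
    then have "(fact n :: real) \<le> 2 ^ Suc ?k"
      by (metis of_nat_fact of_nat_le_iff of_nat_numeral of_nat_power)
    then have h: "log 2 (fact n) \<le> log 2 ((2::real) ^ Suc ?k)"
      by (subst log_le_cancel_iff) auto
    have "log 2 ((2::real) ^ Suc ?k) = real (Suc ?k)" by (rule log_pow_cancel) auto
    then show ?thesis using h by simp
  qed
  show ?thesis using mixable lower upper by blast
qed

end
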